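(* In generalized non-signalling theory (box world), let $X$ be a system of $n$ boxes and $Y$ a system of $m$ boxes, and let $p(\mathbf{a},\mathbf{b}|\mathbf{x},\mathbf{y})=p(\mathbf{a}|\mathbf{x})\,p(\mathbf{b}|\mathbf{y})$ be a product state of the joint system $XY$. Define, for any system $Z$ and state, $\hat H_{\mathrm{basic}}(Z)$ as the infimum of $H_M(Z)$ over all maximally informative measurements $M$ on $Z$ that are basic measurements. Then $\hat H_{\mathrm{basic}}(XY)=\hat H_{\mathrm{basic}}(X)+\hat H_{\mathrm{basic}}(Y)$, where $\hat H_{\mathrm{basic}}(X)$ and $\hat H_{\mathrm{basic}}(Y)$ are computed for the reduced states on $X$ and $Y$.
   Context: Box world (GNST): a box has a finite set of inputs and outputs. A system of boxes has states given by all collections $p(\mathbf{a}|\mathbf{x})\ge0$ (output tuple $\mathbf{a}$, input tuple $\mathbf{x}$) that are normalized ($\sum_{\mathbf{a}}p(\mathbf{a}|\mathbf{x})=1$) and no-signalling (for each box $i$, $\sum_{a_i}p(\mathbf{a}|\mathbf{x})$ is independent of $x_i$); reduced states are obtained by summing out outputs. An effect is any linear map $\mu$ from states to $[0,1]$, represented by a vector $\mathbf{R}$ if $\mu(\mathbf{p})=\sum p(\mathbf{a}|\mathbf{x})R(\mathbf{a}|\mathbf{x})$ for all states; a measurement is a finite set $\{(r,\mu_r)\}$ of effects summing to the constant map $1$, and $H_M(Z)$ denotes the Shannon entropy of the outcome distribution $(\mu_r(\mathbf{p}))_r$. A basic measurement: sequentially choose an unmeasured box and an input for it (the choice may depend on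 outputs already observed), observe the output, until all boxes are measured, then output a deterministic function $r(\mathbf{a})$ of the outputs. A measurement $N=\{(s,\nu_s)\}$ refines $M=\{(r,\mu_r)\}$ if the outcomes of $N$ can be partitioned into sets $P_r$ with $\mu_r=\sum_{s\in P_r}\nu_s$; the refinement is trivial if $\nu_s\propto\mu_r$ whenever $s\in P_r$; $M$ is maximally informative if it has no non-trivial refinement. *)

theory Defs
  imports Complex_Main "HOL-Library.FuncSet"
begin

(* A system of n boxes: box i (i < n) has input set ins i and output set outs i.
   Input/output labels are natural numbers; tuples are extensional functions on {..<n}. *)

definition tuples :: "nat \<Rightarrow> (nat \<Rightarrow> nat set) \<Rightarrow> (nat \<Rightarrow> nat) set" where
  "tuples n S = Pi\<^sub>E {..<n} S"

type_synonym bstate = "(nat \<Rightarrow> nat) \<Rightarrow> (nat \<Rightarrow> nat) \<Rightarrow> real"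
  (* p a x = p(a|x), output tuple a, input tuple x *)

definition is_state :: "nat \<Rightarrow> (nat \<Rightarrow> nat set) \<Rightarrow> (nat \<Rightarrow> nat set) \<Rightarrow> bstate \<Rightarrow> bool" where
  "is_state n ins outs p \<longleftrightarrow>
     (\<forall>a\<in>tuples n outs. \<forall>x\<in>tuples n ins. 0 \<le> p a x) \<and>
     (\<forall>x\<in>tuples n ins. (\<Sum>a\<in>tuples n outs. p a x) = 1) \<and>
     (\<forall>i<n. \<forall>a\<in>tuples n outs. \<forall>x\<in>tuples n ins. \<forall>x'\<in>ins i.
        (\<Sum>c\<in>outs i. p (a(i := c)) x) = (\<Sum>c\<in>outs i. p (a(i := c)) (x(i := x'))))"

definition is_effect :: "nat \<Rightarrow> (nat \<Rightarrow> nat set) \<Rightarrow> (nat \<Rightarrow> nat set) \<Rightarrow> (bstate \<Rightarrow> real) \<Rightarrow> bool" where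
  "is_effect n ins outs \<mu> \<longleftrightarrow>
     (\<exists>R :: (nat \<Rightarrow> nat) \<Rightarrow> (nat \<Rightarrow> nat) \<Rightarrow> real. \<forall>p. is_state n ins outs p \<longrightarrow>
         \<mu> p = (\<Sum>a\<in>tuples n outs. \<Sum>x\<in>tuples n ins. p a x * R a x)) \<and>
     (\<forall>p. is_state n ins outs p \<longrightarrow> 0 \<le> \<mu> p \<and> \<mu> p \<le> 1)"

(* a measurement: finite set of outcome labels together with an effect for each outcome *)
type_synonym meas = "nat set \<times> (nat \<Rightarrow> bstate \<Rightarrow> real)"

definition is_measurement :: "nat \<Rightarrow> (nat \<Rightarrow> nat set) \<Rightarrow> (nat \<Rightarrow> nat set) \<Rightarrow> meas \<Rightarrow> bool" where
  "is_measurement n ins outs M \<longleftrightarrow>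
     finite (fst M) \<and> (\<forall>r\<in>fst M. is_effect n ins outs (snd M r)) \<and>
     (\<forall>p. is_state n ins outs p \<longrightarrow> (\<Sum>r\<in>fst M. snd M r p) = 1)"

(* f encodes the partition of the outcomes of N into sets P_r = {s. f s = r} *)
definition refinement_via :: "nat \<Rightarrow> (nat \<Rightarrow> nat set) \<Rightarrow> (nat \<Rightarrow> nat set) \<Rightarrow> meas \<Rightarrow> meas \<Rightarrow> (nat \<Rightarrow> nat) \<Rightarrow> bool" where
  "refinement_via n ins outs N M f \<longleftrightarrow>
     (\<forall>s\<in>fst N. f s \<in> fst M) \<and>
     (\<forall>r\<in>fst M. \<forall>p. is_state n ins outs p \<longrightarrow>
        snd M r p = (\<Sum>s\<in>{s\<in>fst N. f s = r}. snd N s p))"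

definition trivial_via :: "nat \<Rightarrow> (nat \<Rightarrow> nat set) \<Rightarrow> (nat \<Rightarrow> nat set) \<Rightarrow> meas \<Rightarrow> meas \<Rightarrow> (nat \<Rightarrow> nat) \<Rightarrow> bool" where
  "trivial_via n ins outs N M f \<longleftrightarrow>
     (\<forall>s\<in>fst N. \<exists>c::real. \<forall>p. is_state n ins outs p \<longrightarrow> snd N s p = c * snd M (f s) p)"

definition max_informative :: "nat \<Rightarrow> (nat \<Rightarrow> nat set) \<Rightarrow> (nat \<Rightarrow> nat set) \<Rightarrow> meas \<Rightarrow> bool" where
  "max_informative n ins outs M \<longleftrightarrow>
     is_measurement n ins outs M \<and>
     (\<forall>N f. is_measurement n ins outs N \<and> refinement_via n ins outs N M f \<longrightarrow>
            trivial_via n ins outs N M f)"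

definition shannon :: "nat set \<Rightarrow> (nat \<Rightarrow> real) \<Rightarrow> real" where
  "shannon Os q = - (\<Sum>r\<in>Os. if q r = 0 then 0 else q r * log 2 (q r))"

definition H_M :: "meas \<Rightarrow> bstate \<Rightarrow> real" where
  "H_M M p = shannon (fst M) (\<lambda>r. snd M r p)"

(* Basic measurements. A history is a list of (box, input, output) triples;
   a strategy chooses the next (box, input) from the history observed so far. *)
type_synonym strategy = "(nat \<times> nat \<times> nat) list \<Rightarrow> nat \<times> nat"

definition valid_strategy :: "nat \<Rightarrow> (nat \<Rightarrow> nat set) \<Rightarrow> strategy \<Rightarrow> bool" where
  "valid_strategy n ins \<sigma> \<longleftrightarrow>
     (\<forall>h. distinct (map fst h) \<and> set (map fst h) \<subseteq> {..<n} \<and> length h < n \<longrightarrow>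
        fst (\<sigma> h) < n \<and> fst (\<sigma> h) \<notin> set (map fst h) \<and> snd (\<sigma> h) \<in> ins (fst (\<sigma> h)))"

fun run :: "strategy \<Rightarrow> (nat \<Rightarrow> nat) \<Rightarrow> nat \<Rightarrow> (nat \<times> nat \<times> nat) list" where
  "run \<sigma> a 0 = []"
| "run \<sigma> a (Suc k) = (let h = run \<sigma> a k in h @ [(fst (\<sigma> h), snd (\<sigma> h), a (fst (\<sigma> h)))])"

(* the input tuple used when the (full) output tuple is a *)
definition inputs_of :: "nat \<Rightarrow> strategy \<Rightarrow> (nat \<Rightarrow> nat) \<Rightarrow> (nat \<Rightarrow> nat)" where
  "inputs_of n \<sigma> a = restrict (\<lambda>i. fst (snd (hd (filter (\<lambda>e. fst e = i) (run \<sigma> a n))))) {..<n}"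

definition basic_meas :: "nat \<Rightarrow> (nat \<Rightarrow> nat set) \<Rightarrow> strategy \<Rightarrow> ((nat \<Rightarrow> nat) \<Rightarrow> nat) \<Rightarrow> meas" where
  "basic_meas n outs \<sigma> r =
     (r ` tuples n outs, \<lambda>k p. \<Sum>a\<in>{a\<in>tuples n outs. r a = k}. p a (inputs_of n \<sigma> a))"

definition is_basic :: "nat \<Rightarrow> (nat \<Rightarrow> nat set) \<Rightarrow> (nat \<Rightarrow> nat set) \<Rightarrow> meas \<Rightarrow> bool" where
  "is_basic n ins outs M \<longleftrightarrow> (\<exists>\<sigma> r. valid_strategy n ins \<sigma> \<and> M = basic_meas n outs \<sigma> r)"

definition H_basic :: "nat \<Rightarrow> (nat \<Rightarrow> nat set) \<Rightarrow> (nat \<Rightarrow> nat set) \<Rightarrow> bstate \<Rightarrow> real" where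
  "H_basic n ins outs p =
     Inf {H_M M p | M. is_basic n ins outs M \<and> max_informative n ins outs M}"

(* joint system XY: boxes 0..n-1 are X, boxes n..n+m-1 are Y *)
definition join_sets :: "nat \<Rightarrow> (nat \<Rightarrow> nat set) \<Rightarrow> (nat \<Rightarrow> nat set) \<Rightarrow> nat \<Rightarrow> nat set" where
  "join_sets n S T = (\<lambda>i. if i < n then S i else T (i - n))"

definition join_tup :: "nat \<Rightarrow> nat \<Rightarrow> (nat \<Rightarrow> nat) \<Rightarrow> (nat \<Rightarrow> nat) \<Rightarrow> (nat \<Rightarrow> nat)" where
  "join_tup n m a b = restrict (\<lambda>i. if i < n then a i else b (i - n)) {..<n+m}"

definition left_tup :: "nat \<Rightarrow> (nat \<Rightarrow> nat) \<Rightarrow> (nat \<Rightarrow> nat)" where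
  "left_tup n c = restrict c {..<n}"

definition right_tup :: "nat \<Rightarrow> nat \<Rightarrow> (nat \<Rightarrow> nat) \<Rightarrow> (nat \<Rightarrow> nat)" where
  "right_tup n m c = restrict (\<lambda>j. c (n + j)) {..<m}"

definition product_state :: "nat \<Rightarrow> nat \<Rightarrow> bstate \<Rightarrow> bstate \<Rightarrow> bstate" where
  "product_state n m pX pY = (\<lambda>c z. pX (left_tup n c) (left_tup n z) * pY (right_tup n m c) (right_tup n m z))"

(* reduced states (marginals); by no-signalling they do not depend on the fixed inputs of the other part *)
definition reduce_left :: "nat \<Rightarrow> nat \<Rightarrow> (nat \<Rightarrow> nat set) \<Rightarrow> (nat \<Rightarrow> nat set) \<Rightarrow> bstate \<Rightarrow> bstate" where
  "reduce_left n m insY outsY p = (\<lambda>a x.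
     \<Sum>b\<in>tuples m outsY. p (join_tup n m a b) (join_tup n m x (SOME y. y \<in> tuples m insY)))"

definition reduce_right :: "nat \<Rightarrow> nat \<Rightarrow> (nat \<Rightarrow> nat set) \<Rightarrow> (nat \<Rightarrow> nat set) \<Rightarrow> bstate \<Rightarrow> bstate" where
  "reduce_right n m insX outsX p = (\<lambda>b y.
     \<Sum>a\<in>tuples n outsX. p (join_tup n m a b) (join_tup n m (SOME x. x \<in> tuples n insX) y))"

end

theory Submission
  imports Defs
begin


definition dets :: "nat \<Rightarrow> (nat\<Rightarrow>nat set) \<Rightarrow> (nat\<Rightarrow>nat set) \<Rightarrow> (nat \<Rightarrow> nat \<Rightarrow> nat) set" where
  "dets n ins outs = Pi\<^sub>E {..<n} (\<lambda>i. ins i \<rightarrow>\<^sub>E outs i)"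

definition Dst :: "nat \<Rightarrow> (nat \<Rightarrow> nat \<Rightarrow> nat) \<Rightarrow> bstate" where
  "Dst n f = (\<lambda>a x. if \<forall>i<n. a i = f i (x i) then 1 else 0)"

definition nsig :: "nat \<Rightarrow> (nat\<Rightarrow>nat set) \<Rightarrow> (nat\<Rightarrow>nat set) \<Rightarrow> bstate \<Rightarrow> bool" where
  "nsig n ins outs q \<longleftrightarrow> (\<forall>i<n. \<forall>a\<in>tuples n outs. \<forall>x\<in>tuples n ins. \<forall>x'\<in>ins i.
        (\<Sum>c\<in>outs i. q (a(i := c)) x) = (\<Sum>c\<in>outs i. q (a(i := c)) (x(i := x'))))"

definition SP :: "nat \<Rightarrow> (nat\<Rightarrow>nat set) \<Rightarrow> (nat\<Rightarrow>nat set) \<Rightarrow> bstate set" where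
  "SP n ins outs = {q. \<exists>\<beta>. \<forall>a\<in>tuples n outs. \<forall>x\<in>tuples n ins.
      q a x = (\<Sum>f\<in>dets n ins outs. \<beta> f * Dst n f a x)}"

lemma tuples_upd: "a \<in> tuples n S \<Longrightarrow> i < n \<Longrightarrow> v \<in> S i \<Longrightarrow> a(i := v) \<in> tuples n S"
  unfolding tuples_def by (auto simp: PiE_def Pi_def extensional_def)

lemma tuples_ext: "a \<in> tuples n S \<Longrightarrow> v \<in> S n \<Longrightarrow> a(n := v) \<in> tuples (Suc n) S"
  unfolding tuples_def by (auto simp: PiE_def Pi_def extensional_def less_Suc_eq)

lemma tuples_trunc: "c \<in> tuples (Suc n) S \<Longrightarrow> restrict c {..<n} \<in> tuples n S"
  unfolding tuples_def by (auto simp: PiE_def Pi_def extensional_def)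

lemma tuples_last: "c \<in> tuples (Suc n) S \<Longrightarrow> c n \<in> S n"
  unfolding tuples_def by (auto simp: PiE_def Pi_def)

lemma tuples_split: "c \<in> tuples (Suc n) S \<Longrightarrow> (restrict c {..<n})(n := c n) = c"
  unfolding tuples_def by (auto simp: PiE_def extensional_def fun_eq_iff less_Suc_eq)

lemma tuples_mem: "a \<in> tuples n S \<Longrightarrow> i < n \<Longrightarrow> a i \<in> S i"
  unfolding tuples_def by auto

lemma tuples_out: "a \<in> tuples n S \<Longrightarrow> \<not> i < n \<Longrightarrow> a i = undefined"
  unfolding tuples_def by (auto simp: PiE_def extensional_def)

lemma finite_tuples: "(\<And>i. i < n \<Longrightarrow> finite (S i)) \<Longrightarrow> finite (tuples n S)"
  unfolding tuples_def by (rule finite_PiE) auto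

lemma finite_dets: "(\<And>i. i < n \<Longrightarrow> finite (ins i) \<and> finite (outs i)) \<Longrightarrow> finite (dets n ins outs)"
  unfolding dets_def by (intro finite_PiE) (auto intro!: finite_PiE)

lemma Dst_ext: "Dst (Suc n) (f(n := g)) c z = Dst n f c z * (if c n = g (z n) then 1 else 0)"
  unfolding Dst_def by (auto simp: less_Suc_eq)

lemma Dst_restrict: "Dst n f (restrict c {..<n}) (restrict z {..<n}) = Dst n f c z"
  unfolding Dst_def by auto

lemma SP_cong: "q \<in> SP n ins outs \<Longrightarrow> (\<And>a x. a \<in> tuples n outs \<Longrightarrow> x \<in> tuples n ins \<Longrightarrow> q' a x = q a x)
   \<Longrightarrow> q' \<in> SP n ins outs"
  unfolding SP_def by auto

lemma SP_add: "q1 \<in> SP n ins outs \<Longrightarrow> q2 \<in> SP n ins outs \<Longrightarrow> (\<lambda>a x. q1 a x + q2 a x) \<in> SP n ins outs"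
proof -
  assume "q1 \<in> SP n ins outs" "q2 \<in> SP n ins outs"
  then obtain b1 b2 where
    "\<forall>a\<in>tuples n outs. \<forall>x\<in>tuples n ins. q1 a x = (\<Sum>f\<in>dets n ins outs. b1 f * Dst n f a x)"
    "\<forall>a\<in>tuples n outs. \<forall>x\<in>tuples n ins. q2 a x = (\<Sum>f\<in>dets n ins outs. b2 f * Dst n f a x)"
    unfolding SP_def by auto
  then show ?thesis unfolding SP_def
    by (auto intro!: exI[of _ "\<lambda>f. b1 f + b2 f"] simp: distrib_right sum.distrib)
qed

lemma SP_scale: "q \<in> SP n ins outs \<Longrightarrow> (\<lambda>a x. k * q a x) \<in> SP n ins outs"
proof -
  assume "q \<in> SP n ins outs"
  then obtain b where
    "\<forall>a\<in>tuples n outs. \<forall>x\<in>tuples n ins. q a x = (\<Sum>f\<in>dets n ins outs. b f * Dst n f a x)"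
    unfolding SP_def by auto
  then show ?thesis unfolding SP_def
    by (auto intro!: exI[of _ "\<lambda>f. k * b f"] simp: sum_distrib_left mult.assoc)
qed

lemma SP_zero: "(\<lambda>a x. 0) \<in> SP n ins outs"
  unfolding SP_def by (auto intro!: exI[of _ "\<lambda>f. 0"])

lemma SP_sum: "finite K \<Longrightarrow> (\<And>k. k \<in> K \<Longrightarrow> w k \<in> SP n ins outs) \<Longrightarrow> (\<lambda>a x. \<Sum>k\<in>K. w k a x) \<in> SP n ins outs"
proof (induction K rule: finite_induct)
  case empty then show ?case using SP_zero by simp
next
  case (insert k K)
  have "(\<lambda>a x. w k a x + (\<Sum>k\<in>K. w k a x)) \<in> SP n ins outs"
    using insert by (intro SP_add) auto
  then show ?case using insert by simp
qed

lemma SP_diff: "q1 \<in> SP n ins outs \<Longrightarrow> q2 \<in> SP n ins outs \<Longrightarrow> (\<lambda>a x. q1 a x - q2 a x) \<in> SP n ins outs"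
  using SP_add[of q1 n ins outs "\<lambda>a x. (-1) * q2 a x"] SP_scale[of q2 n ins outs "-1"] by simp

lemma SP_D: "f \<in> dets n ins outs \<Longrightarrow> finite (dets n ins outs) \<Longrightarrow> Dst n f \<in> SP n ins outs"
  unfolding SP_def
proof (intro CollectI exI[of _ "\<lambda>f'. if f' = f then 1 else 0"] ballI)
  fix a x assume "f \<in> dets n ins outs" "finite (dets n ins outs)"
  then show "Dst n f a x = (\<Sum>f'\<in>dets n ins outs. (if f' = f then 1 else 0) * Dst n f' a x)"
    by (subst sum.cong[OF refl, of _ _ "\<lambda>f'. if f' = f then Dst n f' a x else 0"]) (auto simp: sum.delta)
qed

lemma dets_ext: "f \<in> dets n ins outs \<Longrightarrow> g \<in> ins n \<rightarrow>\<^sub>E outs n \<Longrightarrow> f(n := g) \<in> dets (Suc n) ins outs"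
  unfolding dets_def by (auto simp: PiE_def Pi_def extensional_def less_Suc_eq)

lemma dets_trunc: "f \<in> dets (Suc n) ins outs \<Longrightarrow> restrict f {..<n} \<in> dets n ins outs"
  unfolding dets_def by (auto simp: PiE_def Pi_def extensional_def)

lemma dets_split: "f \<in> dets (Suc n) ins outs \<Longrightarrow> (restrict f {..<n})(n := f n) = f"
  unfolding dets_def by (auto simp: PiE_def extensional_def fun_eq_iff less_Suc_eq)

lemma dets_restrict: "f \<in> dets n ins outs \<Longrightarrow> restrict f {..<n} = f"
  unfolding dets_def by (auto simp: PiE_def extensional_def fun_eq_iff)

lemma dets_out: "f \<in> dets n ins outs \<Longrightarrow> \<not> i < n \<Longrightarrow> f i = undefined"
  unfolding dets_def by (auto simp: PiE_def extensional_def)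

lemma SP_ext:
  assumes q: "q \<in> SP n ins outs" and g: "g \<in> ins n \<rightarrow>\<^sub>E outs n"
    and fin: "finite (dets (Suc n) ins outs)"
  shows "(\<lambda>c z. q (restrict c {..<n}) (restrict z {..<n}) * (if c n = g (z n) then 1 else 0)) \<in> SP (Suc n) ins outs"
proof -
  obtain b where b: "\<forall>a\<in>tuples n outs. \<forall>x\<in>tuples n ins. q a x = (\<Sum>f\<in>dets n ins outs. b f * Dst n f a x)"
    using q unfolding SP_def by auto
  let ?F = "dets n ins outs" and ?F' = "dets (Suc n) ins outs"
  have bij: "bij_betw (\<lambda>f. f(n := g)) ?F {f'\<in>?F'. f' n = g}"
  proof (rule bij_betw_byWitness[where f'="\<lambda>f'. restrict f' {..<n}"])
    show "\<forall>a\<in>?F. restrict (a(n := g)) {..<n} = a"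
      by (auto simp: fun_eq_iff dets_out)
    show "\<forall>a'\<in>{f' \<in> ?F'. f' n = g}. (restrict a' {..<n})(n := g) = a'"
      using dets_split by fastforce
    show "(\<lambda>f. f(n := g)) ` ?F \<subseteq> {f' \<in> ?F'. f' n = g}"
      using g dets_ext by fastforce
    show "(\<lambda>f'. restrict f' {..<n}) ` {f' \<in> ?F'. f' n = g} \<subseteq> ?F"
      using dets_trunc by fastforce
  qed
  have finF': "finite {f'\<in>?F'. f' n = g}" using fin by auto
  show ?thesis unfolding SP_def
  proof (intro CollectI exI[of _ "\<lambda>f'. if f' n = g then b (restrict f' {..<n}) else 0"] ballI)
    fix c z assume c: "c \<in> tuples (Suc n) outs" and z: "z \<in> tuples (Suc n) ins"
    have "(\<Sum>f'\<in>?F'. (if f' n = g then b (restrict f' {..<n}) else 0) * Dst (Suc n) f' c z)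
        = (\<Sum>f'\<in>{f'\<in>?F'. f' n = g}. b (restrict f' {..<n}) * Dst (Suc n) f' c z)"
      using fin by (simp add: sum.inter_filter) (rule sum.cong, auto)
    also have "\<dots> = (\<Sum>f\<in>?F. b (restrict (f(n:=g)) {..<n}) * Dst (Suc n) (f(n:=g)) c z)"
      using sum.reindex_bij_betw[OF bij, of "\<lambda>f'. b (restrict f' {..<n}) * Dst (Suc n) f' c z"] by simp
    also have "\<dots> = (\<Sum>f\<in>?F. b f * Dst n f (restrict c {..<n}) (restrict z {..<n})) * (if c n = g (z n) then 1 else 0)"
      unfolding sum_distrib_right
      by (rule sum.cong[OF refl]) (auto simp: Dst_ext Dst_restrict dets_restrict)
    also have "\<dots> = q (restrict c {..<n}) (restrict z {..<n}) * (if c n = g (z n) then 1 else 0)"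
      using b tuples_trunc[OF c] tuples_trunc[OF z] by simp
    finally show "q (restrict c {..<n}) (restrict z {..<n}) * (if c n = g (z n) then 1 else 0) =
       (\<Sum>f'\<in>?F'. (if f' n = g then b (restrict f' {..<n}) else 0) * Dst (Suc n) f' c z)" by simp
  qed
qed

lemma tuples_0: "tuples 0 S = {\<lambda>_. undefined}"
  unfolding tuples_def by simp

lemma dets_0: "dets 0 ins outs = {\<lambda>_. undefined}"
  unfolding dets_def by simp

theorem span:
  assumes fin: "\<And>i. i < n \<Longrightarrow> finite (ins i) \<and> ins i \<noteq> {} \<and> finite (outs i) \<and> outs i \<noteq> {}"
    and ns: "nsig n ins outs q"
  shows "q \<in> SP n ins outs"
  using fin ns
proof (induction n arbitrary: q)
  case 0
  show ?case unfolding SP_def tuples_0 dets_0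
    by (auto intro!: exI[of _ "\<lambda>_. q (\<lambda>_. undefined) (\<lambda>_. undefined)"] simp: Dst_def)
next
  case (Suc n)
  note finS = Suc.prems(1)
  have nsS: "nsig (Suc n) ins outs q" by fact
  define tr :: "(nat \<Rightarrow> nat) \<Rightarrow> (nat \<Rightarrow> nat)" where "tr c = restrict c {..<n}" for c
  define \<eta>0 where "\<eta>0 = (SOME \<xi>. \<xi> \<in> ins n)"
  define \<alpha>0 where "\<alpha>0 = (SOME \<alpha>. \<alpha> \<in> outs n)"
  have \<eta>0: "\<eta>0 \<in> ins n" unfolding \<eta>0_def using finS[of n] by (auto intro: someI_ex)
  have \<alpha>0: "\<alpha>0 \<in> outs n" unfolding \<alpha>0_def using finS[of n] by (auto intro: someI_ex)
  have fins: "finite (ins n)" "finite (outs n)" using finS[of n] by auto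
  define Q where "Q \<xi> \<alpha> = (\<lambda>a x. q (a(n := \<alpha>)) (x(n := \<xi>)))" for \<xi> \<alpha>
  have QSP: "Q \<xi> \<alpha> \<in> SP n ins outs" if "\<xi> \<in> ins n" "\<alpha> \<in> outs n" for \<xi> \<alpha>
  proof (rule Suc.IH)
    show "\<And>i. i < n \<Longrightarrow> finite (ins i) \<and> ins i \<noteq> {} \<and> finite (outs i) \<and> outs i \<noteq> {}"
      using finS by auto
    show "nsig n ins outs (Q \<xi> \<alpha>)"
      unfolding nsig_def
    proof (intro allI impI ballI)
      fix i a x x' assume i: "i < n" and a: "a \<in> tuples n outs" and x: "x \<in> tuples n ins" and x': "x' \<in> ins i"
      have "i \<noteq> n" using i by simp
      have a': "a(n := \<alpha>) \<in> tuples (Suc n) outs" using a that tuples_ext by blast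
      have x'': "x(n := \<xi>) \<in> tuples (Suc n) ins" using x that tuples_ext by blast
      from nsS[unfolded nsig_def, rule_format, of i, OF _ a' x''] i x'
      have "(\<Sum>c\<in>outs i. q ((a(n := \<alpha>))(i := c)) (x(n := \<xi>))) =
            (\<Sum>c\<in>outs i. q ((a(n := \<alpha>))(i := c)) ((x(n := \<xi>))(i := x')))" by simp
      then show "(\<Sum>c\<in>outs i. Q \<xi> \<alpha> (a(i := c)) x) = (\<Sum>c\<in>outs i. Q \<xi> \<alpha> (a(i := c)) (x(i := x')))"
        unfolding Q_def using \<open>i \<noteq> n\<close> by (simp add: fun_upd_twist)
    qed
  qed
  define \<kappa> where "\<kappa> \<beta> = restrict (\<lambda>_. \<beta>) (ins n)" for \<beta> :: nat
  define gg where "gg \<xi> \<alpha> = (\<kappa> \<alpha>0)(\<xi> := \<alpha>)" for \<xi> \<alpha> :: nat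
  have \<kappa>E: "\<kappa> \<beta> \<in> ins n \<rightarrow>\<^sub>E outs n" if "\<beta> \<in> outs n" for \<beta>
    unfolding \<kappa>_def using that by auto
  have ggE: "gg \<xi> \<alpha> \<in> ins n \<rightarrow>\<^sub>E outs n" if "\<xi> \<in> ins n" "\<alpha> \<in> outs n" for \<xi> \<alpha>
    unfolding gg_def \<kappa>_def using that \<alpha>0 by (auto simp: PiE_def Pi_def extensional_def)
  have finD: "finite (dets (Suc n) ins outs)" using finS by (intro finite_dets) auto
  define W where "W \<xi> \<alpha> = (\<lambda>a x. Q \<xi> \<alpha> a x - Q \<eta>0 \<alpha> a x)" for \<xi> \<alpha>
  have WSP: "W \<xi> \<alpha> \<in> SP n ins outs" if "\<xi> \<in> ins n" "\<alpha> \<in> outs n" for \<xi> \<alpha>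
    unfolding W_def using QSP that \<eta>0 by (intro SP_diff) auto
  define ind :: "bool \<Rightarrow> real" where "ind P = (if P then 1 else 0)" for P
  define T1 where "T1 = (\<lambda>c z. \<Sum>\<beta>\<in>outs n. Q \<eta>0 \<beta> (tr c) (tr z) * ind (c n = \<kappa> \<beta> (z n)))"
  define T2 where "T2 = (\<lambda>c z. \<Sum>\<xi>\<in>ins n - {\<eta>0}. \<Sum>\<alpha>\<in>outs n.
        W \<xi> \<alpha> (tr c) (tr z) * ind (c n = gg \<xi> \<alpha> (z n)) - W \<xi> \<alpha> (tr c) (tr z) * ind (c n = \<kappa> \<alpha>0 (z n)))"
  have T1SP: "T1 \<in> SP (Suc n) ins outs"
    unfolding T1_def ind_def tr_def
    using fins by (intro SP_sum SP_ext[OF _ _ finD] QSP \<eta>0 \<kappa>E) auto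
  have T2SP: "T2 \<in> SP (Suc n) ins outs"
    unfolding T2_def ind_def tr_def
    using fins \<alpha>0 by (intro SP_sum SP_diff SP_ext[OF _ _ finD] WSP ggE \<kappa>E) auto
  have T12: "(\<lambda>c z. T1 c z + T2 c z) \<in> SP (Suc n) ins outs"
    using T1SP T2SP by (rule SP_add)
  show ?case
  proof (rule SP_cong[OF T12])
    fix c z assume c: "c \<in> tuples (Suc n) outs" and z: "z \<in> tuples (Suc n) ins"
    define a where "a = tr c"
    define x where "x = tr z"
    define \<alpha> where "\<alpha> = c n"
    define \<xi> where "\<xi> = z n"
    have \<alpha>: "\<alpha> \<in> outs n" unfolding \<alpha>_def using c tuples_last by blast
    have \<xi>: "\<xi> \<in> ins n" unfolding \<xi>_def using z tuples_last by blast
    have ca: "c = a(n := \<alpha>)" unfolding a_def \<alpha>_def tr_def using tuples_split[OF c] by simp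
    have zx: "z = x(n := \<xi>)" unfolding x_def \<xi>_def tr_def using tuples_split[OF z] by simp
    have qQ: "q c z = Q \<xi> \<alpha> a x" unfolding Q_def ca zx by simp
    have T1v: "T1 c z = Q \<eta>0 \<alpha> a x"
    proof -
      have "T1 c z = (\<Sum>\<beta>\<in>outs n. if \<beta> = \<alpha> then Q \<eta>0 \<beta> a x else 0)"
        unfolding T1_def a_def[symmetric] x_def[symmetric] \<alpha>_def[symmetric] \<xi>_def[symmetric]
        by (rule sum.cong) (auto simp: ind_def \<kappa>_def \<xi>)
      then show ?thesis using \<alpha> fins by (simp add: sum.delta')
    qed
    have nsn: "(\<Sum>\<beta>\<in>outs n. Q \<xi> \<beta> a x) = (\<Sum>\<beta>\<in>outs n. Q \<eta>0 \<beta> a x)"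
    proof -
      from nsS[unfolded nsig_def, rule_format, of n c z \<eta>0] c z \<eta>0
      have "(\<Sum>\<beta>\<in>outs n. q (c(n := \<beta>)) z) = (\<Sum>\<beta>\<in>outs n. q (c(n := \<beta>)) (z(n := \<eta>0)))" by simp
      then show ?thesis unfolding Q_def ca zx by simp
    qed
    have T2v: "T2 c z = Q \<xi> \<alpha> a x - Q \<eta>0 \<alpha> a x"
    proof (cases "\<xi> = \<eta>0")
      case True
      have "T2 c z = (\<Sum>\<xi>'\<in>ins n - {\<eta>0}. \<Sum>\<alpha>'\<in>outs n. 0)"
        unfolding T2_def a_def[symmetric] x_def[symmetric] \<alpha>_def[symmetric] \<xi>_def[symmetric]
        by (intro sum.cong refl) (auto simp: gg_def \<kappa>_def True \<eta>0)
      then show ?thesis using True by simp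
    next
      case False
      have gg1: "gg \<xi>' \<alpha>' \<xi> = (if \<xi>' = \<xi> then \<alpha>' else \<alpha>0)" for \<xi>' \<alpha>'
        unfolding gg_def \<kappa>_def using \<xi> by auto
      have "T2 c z = (\<Sum>\<xi>'\<in>ins n - {\<eta>0}. \<Sum>\<alpha>'\<in>outs n.
                W \<xi>' \<alpha>' a x * ind (\<alpha> = (if \<xi>' = \<xi> then \<alpha>' else \<alpha>0)) - W \<xi>' \<alpha>' a x * ind (\<alpha> = \<alpha>0))"
        unfolding T2_def a_def[symmetric] x_def[symmetric] \<alpha>_def[symmetric] \<xi>_def[symmetric]
        by (intro sum.cong refl) (auto simp: gg1 \<kappa>_def \<xi>)
      also have "\<dots> = (\<Sum>\<alpha>'\<in>outs n. W \<xi> \<alpha>' a x * ind (\<alpha> = \<alpha>') - W \<xi> \<alpha>' a x * ind (\<alpha> = \<alpha>0))"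
        using False \<xi> fins
        by (subst sum.remove[of _ \<xi>]) (auto intro!: sum.neutral)
      also have "\<dots> = W \<xi> \<alpha> a x - ind (\<alpha> = \<alpha>0) * (\<Sum>\<alpha>'\<in>outs n. W \<xi> \<alpha>' a x)"
      proof -
        have "(\<Sum>\<alpha>'\<in>outs n. W \<xi> \<alpha>' a x * ind (\<alpha> = \<alpha>')) = (\<Sum>\<alpha>'\<in>outs n. if \<alpha>' = \<alpha> then W \<xi> \<alpha>' a x else 0)"
          by (rule sum.cong) (auto simp: ind_def)
        also have "\<dots> = W \<xi> \<alpha> a x" using \<alpha> fins by (simp add: sum.delta)
        finally have e1: "(\<Sum>\<alpha>'\<in>outs n. W \<xi> \<alpha>' a x * ind (\<alpha> = \<alpha>')) = W \<xi> \<alpha> a x" .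
        have e2: "(\<Sum>\<alpha>'\<in>outs n. W \<xi> \<alpha>' a x * ind (\<alpha> = \<alpha>0)) = ind (\<alpha> = \<alpha>0) * (\<Sum>\<alpha>'\<in>outs n. W \<xi> \<alpha>' a x)"
          by (simp add: sum_distrib_left mult.commute)
        show ?thesis using e1 e2 by (simp add: sum_subtractf)
      qed
      also have "(\<Sum>\<alpha>'\<in>outs n. W \<xi> \<alpha>' a x) = 0"
        unfolding W_def using nsn by (simp add: sum_subtractf)
      finally show ?thesis unfolding W_def by simp
    qed
    show "q c z = T1 c z + T2 c z" using qQ T1v T2v by simp
  qed
qed



lemma tuples_restrict: "a \<in> tuples n S \<Longrightarrow> restrict a {..<n} = a"
  unfolding tuples_def by (auto simp: PiE_def extensional_def fun_eq_iff)

lemma tuples_eqI: "a \<in> tuples n S \<Longrightarrow> b \<in> tuples n S \<Longrightarrow> (\<And>i. i < n \<Longrightarrow> a i = b i) \<Longrightarrow> a = b"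
  unfolding tuples_def by (auto simp: PiE_def extensional_def fun_eq_iff) (metis)

lemma state_nsig: "is_state n ins outs p \<Longrightarrow> nsig n ins outs p"
  unfolding is_state_def nsig_def by blast

lemma dets_app: "f \<in> dets n ins outs \<Longrightarrow> i < n \<Longrightarrow> \<xi> \<in> ins i \<Longrightarrow> f i \<xi> \<in> outs i"
  unfolding dets_def by auto

lemma dets_out2: "f \<in> dets n ins outs \<Longrightarrow> i < n \<Longrightarrow> \<xi> \<notin> ins i \<Longrightarrow> f i \<xi> = undefined"
  unfolding dets_def by (auto simp: PiE_def extensional_def)

lemma Dst_unique:
  assumes f: "f \<in> dets n ins outs" and x: "x \<in> tuples n ins"
  shows "{a \<in> tuples n outs. \<forall>i<n. a i = f i (x i)} = {restrict (\<lambda>i. f i (x i)) {..<n}}"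
proof -
  have m: "restrict (\<lambda>i. f i (x i)) {..<n} \<in> tuples n outs"
    using f x unfolding tuples_def by (auto intro: dets_app)
  show ?thesis using m tuples_eqI by fastforce
qed

lemma Dst_state:
  assumes fin: "\<And>i. i < n \<Longrightarrow> finite (ins i) \<and> ins i \<noteq> {} \<and> finite (outs i) \<and> outs i \<noteq> {}"
    and f: "f \<in> dets n ins outs"
  shows "is_state n ins outs (Dst n f)"
  unfolding is_state_def
proof (intro conjI ballI allI impI)
  fix a x assume "a \<in> tuples n outs" "x \<in> tuples n ins"
  show "0 \<le> Dst n f a x" unfolding Dst_def by simp
next
  fix x assume x: "x \<in> tuples n ins"
  have fo: "finite (tuples n outs)" using fin by (intro finite_tuples) auto
  have "(\<Sum>a\<in>tuples n outs. Dst n f a x) = (\<Sum>a\<in>tuples n outs. if (\<forall>i<n. a i = f i (x i)) then 1 else 0)"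
    unfolding Dst_def by simp
  also have "\<dots> = real (card {a \<in> tuples n outs. \<forall>i<n. a i = f i (x i)})"
    using fo by (simp add: sum.If_cases Int_def conj_commute)
  also have "\<dots> = 1" using Dst_unique[OF f x] by simp
  finally show "(\<Sum>a\<in>tuples n outs. Dst n f a x) = 1" .
next
  fix i a x x' assume i: "i < n" and a: "a \<in> tuples n outs" and x: "x \<in> tuples n ins" and x': "x' \<in> ins i"
  have fo: "finite (outs i)" using fin i by auto
  have key: "(\<Sum>c\<in>outs i. Dst n f (a(i := c)) y) = (if \<forall>j<n. j \<noteq> i \<longrightarrow> a j = f j (y j) then 1 else 0)"
    if y: "y i \<in> ins i" for y
  proof -
    have "(\<Sum>c\<in>outs i. Dst n f (a(i := c)) y) =
        (\<Sum>c\<in>outs i. if c = f i (y i) then (if \<forall>j<n. j \<noteq> i \<longrightarrow> a j = f j (y j) then 1 else 0) else 0)"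
      unfolding Dst_def by (rule sum.cong) (auto, metis i)
    also have "\<dots> = (if \<forall>j<n. j \<noteq> i \<longrightarrow> a j = f j (y j) then 1 else 0)"
      using dets_app[OF f i y] fo by (simp add: sum.delta')
    finally show ?thesis .
  qed
  have "x i \<in> ins i" using x i tuples_mem by blast
  then show "(\<Sum>c\<in>outs i. Dst n f (a(i := c)) x) = (\<Sum>c\<in>outs i. Dst n f (a(i := c)) (x(i := x')))"
    using key[of x] key[of "x(i := x')"] x' by simp
qed

definition Lin :: "nat \<Rightarrow> (nat\<Rightarrow>nat set) \<Rightarrow> (nat\<Rightarrow>nat set) \<Rightarrow> ((nat \<Rightarrow> nat) \<Rightarrow> (nat \<Rightarrow> nat) \<Rightarrow> real) \<Rightarrow> bstate \<Rightarrow> real" where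
  "Lin n ins outs R p = (\<Sum>a\<in>tuples n outs. \<Sum>x\<in>tuples n ins. p a x * R a x)"

lemma Lin_diff: "Lin n ins outs R (\<lambda>a x. p a x - q a x) = Lin n ins outs R p - Lin n ins outs R q"
  unfolding Lin_def by (simp add: left_diff_distrib sum_subtractf)

lemma Lin_cong: "(\<And>a x. a \<in> tuples n outs \<Longrightarrow> x \<in> tuples n ins \<Longrightarrow> p a x = q a x) \<Longrightarrow> Lin n ins outs R p = Lin n ins outs R q"
  unfolding Lin_def by (intro sum.cong refl) auto

lemma Lin_SP:
  assumes "\<forall>a\<in>tuples n outs. \<forall>x\<in>tuples n ins. p a x = (\<Sum>f\<in>F. \<beta> f * D f a x)"
  shows "Lin n ins outs R p = (\<Sum>f\<in>F. \<beta> f * Lin n ins outs R (D f))"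
proof -
  have "Lin n ins outs R p = (\<Sum>a\<in>tuples n outs. \<Sum>x\<in>tuples n ins. \<Sum>f\<in>F. \<beta> f * (D f a x * R a x))"
    unfolding Lin_def using assms by (intro sum.cong refl) (simp add: sum_distrib_right mult.assoc)
  also have "\<dots> = (\<Sum>f\<in>F. \<beta> f * Lin n ins outs R (D f))"
    unfolding Lin_def by (simp add: sum_distrib_left sum.swap[of _ F])
  finally show ?thesis .
qed

lemma Dst_identity:
  assumes k: "k < n" and agree: "\<And>i. i \<noteq> k \<Longrightarrow> f i = f' i" and v: "f k zz = f' k zz"
  shows "Dst n f a x - Dst n (f(k := (f k)(zz := b))) a x = Dst n f' a x - Dst n (f'(k := (f' k)(zz := b))) a x"
proof -
  define A where "A = (\<forall>i<n. i \<noteq> k \<longrightarrow> a i = f i (x i))"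
  have A': "A = (\<forall>i<n. i \<noteq> k \<longrightarrow> a i = f' i (x i))" unfolding A_def using agree by auto
  have e: "Dst n h a x = (if A \<and> a k = h k (x k) then 1 else 0)" if "\<And>i. i \<noteq> k \<Longrightarrow> h i = f i" for h
    unfolding Dst_def A_def using that k by (auto, metis, metis)
  have e': "Dst n h a x = (if A \<and> a k = h k (x k) then 1 else 0)" if "\<And>i. i \<noteq> k \<Longrightarrow> h i = f' i" for h
    unfolding Dst_def A' using that k by (auto, metis, metis)
  show ?thesis
    by (subst e, simp, subst e, simp, subst e', simp, subst e', simp) (use v in auto)
qed

lemma extremal:
  assumes fin: "\<And>i. i < n \<Longrightarrow> finite (ins i) \<and> ins i \<noteq> {} \<and> finite (outs i) \<and> outs i \<noteq> {}"
    and a0: "a0 \<in> tuples n outs" and x0: "x0 \<in> tuples n ins"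
    and rep: "\<forall>p. is_state n ins outs p \<longrightarrow> \<nu> p = Lin n ins outs R p"
    and bnd: "\<forall>p. is_state n ins outs p \<longrightarrow> 0 \<le> \<nu> p \<and> \<nu> p \<le> p a0 x0"
  shows "\<exists>c. \<forall>p. is_state n ins outs p \<longrightarrow> \<nu> p = c * p a0 x0"
proof -
  let ?F = "dets n ins outs"
  let ?L = "Lin n ins outs R"
  have finF: "finite ?F" using fin by (intro finite_dets) auto
  have LD: "?L (Dst n f) = \<nu> (Dst n f)" if "f \<in> ?F" for f
    using rep Dst_state[OF fin that] by auto
  have zero: "?L (Dst n f) = 0" if f: "f \<in> ?F" and "\<not> (\<forall>i<n. f i (x0 i) = a0 i)" for f
  proof -
    have "Dst n f a0 x0 = 0" unfolding Dst_def using that(2) by auto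
    then show ?thesis using bnd Dst_state[OF fin f] LD[OF f] by (metis order_antisym)
  qed
  define fs where "fs = restrict (\<lambda>i. restrict (\<lambda>_. a0 i) (ins i)) {..<n}"
  have fs: "fs \<in> ?F" unfolding fs_def dets_def using a0 tuples_mem by fastforce
  have x0m: "\<And>i. i < n \<Longrightarrow> x0 i \<in> ins i" using x0 tuples_mem by blast
  have step: "?L (Dst n f) = ?L (Dst n f')"
    if f: "f \<in> ?F" and f': "f' \<in> ?F" and k: "k < n" and agree: "\<And>i. i \<noteq> k \<Longrightarrow> f i = f' i"
      and v: "f k (x0 k) = a0 k" and v': "f' k (x0 k) = a0 k" for f f' k
  proof (cases "\<exists>b\<in>outs k. b \<noteq> a0 k")
    case True
    then obtain b where b: "b \<in> outs k" "b \<noteq> a0 k" by auto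
    define g where "g = f(k := (f k)(x0 k := b))"
    define g' where "g' = f'(k := (f' k)(x0 k := b))"
    have gF: "g \<in> ?F" "g' \<in> ?F" unfolding g_def g'_def using f f' b k x0m
      by (auto simp: dets_def PiE_def Pi_def extensional_def)
    have "g k (x0 k) = b" "g' k (x0 k) = b" unfolding g_def g'_def by auto
    then have "\<not> (\<forall>i<n. g i (x0 i) = a0 i)" "\<not> (\<forall>i<n. g' i (x0 i) = a0 i)" using k b by auto
    then have "?L (Dst n g) = 0" "?L (Dst n g') = 0"
      using zero[OF gF(1)] zero[OF gF(2)] by auto
    moreover have "?L (Dst n f) - ?L (Dst n g) = ?L (Dst n f') - ?L (Dst n g')"
    proof -
      have "(\<lambda>a x. Dst n f a x - Dst n g a x) = (\<lambda>a x. Dst n f' a x - Dst n g' a x)"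
        unfolding g_def g'_def by (intro ext Dst_identity[OF k]) (use agree v v' in auto)
      then show ?thesis unfolding Lin_diff[symmetric] by simp
    qed
    ultimately show ?thesis by simp
  next
    case False
    have "f k = f' k"
    proof
      fix \<xi> show "f k \<xi> = f' k \<xi>"
      proof (cases "\<xi> \<in> ins k")
        case True
        then show ?thesis using dets_app[OF f k True] dets_app[OF f' k True] False by metis
      next
        case False
        then show ?thesis using dets_out2[OF f k] dets_out2[OF f' k] by simp
      qed
    qed
    then have "f = f'" using agree by (metis ext)
    then show ?thesis by simp
  qed
  have cons: "?L (Dst n f) = ?L (Dst n fs)" if f: "f \<in> ?F" and fc: "\<forall>i<n. f i (x0 i) = a0 i" for f
  proof -
    define fk where "fk k = (\<lambda>i. if i < k then fs i else f i)" for k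
    have fkF: "fk k \<in> ?F" for k unfolding fk_def using f fs by (auto simp: dets_def PiE_def Pi_def extensional_def)
    have "?L (Dst n (fk k)) = ?L (Dst n f)" if "k \<le> n" for k
      using that
    proof (induction k)
      case 0 then show ?case by (simp add: fk_def)
    next
      case (Suc k)
      have "?L (Dst n (fk (Suc k))) = ?L (Dst n (fk k))"
      proof (rule step[OF fkF fkF, of k])
        show "k < n" using Suc by simp
        show "\<And>i. i \<noteq> k \<Longrightarrow> fk (Suc k) i = fk k i" unfolding fk_def by auto
        show "fk (Suc k) k (x0 k) = a0 k" unfolding fk_def fs_def using x0m Suc by auto
        show "fk k k (x0 k) = a0 k" unfolding fk_def using fc Suc by auto
      qed
      then show ?case using Suc by simp
    qed
    moreover have "fk n = fs" unfolding fk_def using f fs by (auto simp: fun_eq_iff dets_out)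
    ultimately show ?thesis by (metis order_refl)
  qed
  define c where "c = ?L (Dst n fs)"
  have Dc: "?L (Dst n f) = c * Dst n f a0 x0" if f: "f \<in> ?F" for f
  proof (cases "\<forall>i<n. f i (x0 i) = a0 i")
    case True
    then show ?thesis using cons[OF f True] unfolding c_def Dst_def by auto
  next
    case False
    then show ?thesis using zero[OF f False] unfolding Dst_def by auto
  qed
  show ?thesis
  proof (intro exI allI impI)
    fix p assume p: "is_state n ins outs p"
    obtain \<beta> where \<beta>: "\<forall>a\<in>tuples n outs. \<forall>x\<in>tuples n ins. p a x = (\<Sum>f\<in>?F. \<beta> f * Dst n f a x)"
      using span[OF fin state_nsig[OF p]] unfolding SP_def by auto
    have "\<nu> p = ?L p" using rep p by auto
    also have "\<dots> = (\<Sum>f\<in>?F. \<beta> f * ?L (Dst n f))" by (rule Lin_SP[OF \<beta>])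
    also have "\<dots> = c * (\<Sum>f\<in>?F. \<beta> f * Dst n f a0 x0)"
      by (simp add: Dc sum_distrib_left mult.left_commute)
    also have "\<dots> = c * p a0 x0" using \<beta> a0 x0 by simp
    finally show "\<nu> p = c * p a0 x0" .
  qed
qed



lemma run_length[simp]: "length (run \<sigma> a k) = k"
  by (induction k) (auto simp: Let_def)

lemma run_Suc': "run \<sigma> a (Suc k) = run \<sigma> a k @ [(fst (\<sigma> (run \<sigma> a k)), snd (\<sigma> (run \<sigma> a k)), a (fst (\<sigma> (run \<sigma> a k))))]"
  by (simp add: Let_def)

lemma run_out: "e \<in> set (run \<sigma> a k) \<Longrightarrow> snd (snd e) = a (fst e)"
  by (induction k) (auto simp: Let_def)

lemma run_dep: "(\<And>i. i \<in> fst ` set (run \<sigma> a k) \<Longrightarrow> a' i = a i) \<Longrightarrow> run \<sigma> a' k = run \<sigma> a k"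
proof (induction k)
  case 0 then show ?case by simp
next
  case (Suc k)
  have "run \<sigma> a' k = run \<sigma> a k" using Suc by (intro Suc.IH) (auto simp: Let_def)
  moreover have "a' (fst (\<sigma> (run \<sigma> a k))) = a (fst (\<sigma> (run \<sigma> a k)))" using Suc.prems by (auto simp: Let_def)
  ultimately show ?case by (simp add: Let_def)
qed

definition wfh :: "nat \<Rightarrow> (nat \<Rightarrow> nat set) \<Rightarrow> (nat \<times> nat \<times> nat) list \<Rightarrow> bool" where
  "wfh n ins h \<longleftrightarrow> distinct (map fst h) \<and> set (map fst h) \<subseteq> {..<n} \<and> (\<forall>e\<in>set h. fst (snd e) \<in> ins (fst e))"

lemma run_wf: "valid_strategy n ins \<sigma> \<Longrightarrow> k \<le> n \<Longrightarrow> wfh n ins (run \<sigma> a k)"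
proof (induction k)
  case 0 then show ?case by (simp add: wfh_def)
next
  case (Suc k)
  then have w: "wfh n ins (run \<sigma> a k)" by simp
  then have "fst (\<sigma> (run \<sigma> a k)) < n \<and> fst (\<sigma> (run \<sigma> a k)) \<notin> set (map fst (run \<sigma> a k)) \<and>
     snd (\<sigma> (run \<sigma> a k)) \<in> ins (fst (\<sigma> (run \<sigma> a k)))"
    using Suc.prems unfolding valid_strategy_def wfh_def by auto
  then show ?case using w unfolding wfh_def by (auto simp: Let_def)
qed

lemma wfh_card: "wfh n ins h \<Longrightarrow> length h \<le> n"
  unfolding wfh_def by (metis card_lessThan card_mono distinct_card finite_lessThan length_map)

lemma run_full: "valid_strategy n ins \<sigma> \<Longrightarrow> fst ` set (run \<sigma> a n) = {..<n}"
proof -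
  assume v: "valid_strategy n ins \<sigma>"
  have w: "wfh n ins (run \<sigma> a n)" using run_wf[OF v] by simp
  then have "card (fst ` set (run \<sigma> a n)) = n"
    unfolding wfh_def by (metis distinct_card length_map run_length set_map)
  moreover have "fst ` set (run \<sigma> a n) \<subseteq> {..<n}" using w unfolding wfh_def by auto
  ultimately show ?thesis by (metis card_lessThan card_subset_eq finite_lessThan)
qed

locale sys =
  fixes n :: nat and ins outs :: "nat \<Rightarrow> nat set"
  assumes fin: "\<And>i. i < n \<Longrightarrow> finite (ins i) \<and> ins i \<noteq> {} \<and> finite (outs i) \<and> outs i \<noteq> {}"
begin

abbreviation "TO \<equiv> tuples n outs"
abbreviation "TI \<equiv> tuples n ins"

lemma finTO: "finite TO" using fin by (intro finite_tuples) auto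
lemma finTI: "finite TI" using fin by (intro finite_tuples) auto

lemma TO_ne: "TO \<noteq> {}"
proof -
  have "restrict (\<lambda>i. SOME c. c \<in> outs i) {..<n} \<in> TO"
    unfolding tuples_def using fin by (auto intro: someI_ex) (metis all_not_in_conv someI_ex)
  then show ?thesis by auto
qed

lemma inputs_of_TI: "valid_strategy n ins \<sigma> \<Longrightarrow> inputs_of n \<sigma> a \<in> TI"
proof -
  assume v: "valid_strategy n ins \<sigma>"
  have w: "wfh n ins (run \<sigma> a n)" using run_wf[OF v] by simp
  have "fst (snd (hd (filter (\<lambda>e. fst e = i) (run \<sigma> a n)))) \<in> ins i" if i: "i < n" for i
  proof -
    have "i \<in> fst ` set (run \<sigma> a n)" using run_full[OF v] i by auto
    then have ne: "filter (\<lambda>e. fst e = i) (run \<sigma> a n) \<noteq> []" by (auto simp: filter_empty_conv)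
    then have "hd (filter (\<lambda>e. fst e = i) (run \<sigma> a n)) \<in> set (filter (\<lambda>e. fst e = i) (run \<sigma> a n))"
      by (rule hd_in_set)
    then show ?thesis using w unfolding wfh_def by auto
  qed
  then show ?thesis unfolding inputs_of_def tuples_def by auto
qed

definition agrees :: "(nat \<Rightarrow> nat) \<Rightarrow> (nat \<times> nat \<times> nat) list \<Rightarrow> bool" where
  "agrees a h \<longleftrightarrow> (\<forall>e\<in>set h. a (fst e) = snd (snd e))"

definition xin :: "(nat \<times> nat \<times> nat) list \<Rightarrow> (nat \<Rightarrow> nat)" where
  "xin h = restrict (\<lambda>i. if i \<in> fst ` set h then fst (snd (hd (filter (\<lambda>e. fst e = i) h))) else (SOME \<xi>. \<xi> \<in> ins i)) {..<n}"

definition Pm :: "bstate \<Rightarrow> (nat \<times> nat \<times> nat) list \<Rightarrow> real" where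
  "Pm p h = (\<Sum>a\<in>{a\<in>TO. agrees a h}. p a (xin h))"

lemma xin_TI: "wfh n ins h \<Longrightarrow> xin h \<in> TI"
proof -
  assume w: "wfh n ins h"
  have "(if i \<in> fst ` set h then fst (snd (hd (filter (\<lambda>e. fst e = i) h))) else (SOME \<xi>. \<xi> \<in> ins i)) \<in> ins i"
    if i: "i < n" for i
  proof (cases "i \<in> fst ` set h")
    case True
    then have ne: "filter (\<lambda>e. fst e = i) h \<noteq> []" by (auto simp: filter_empty_conv)
    then have "hd (filter (\<lambda>e. fst e = i) h) \<in> set (filter (\<lambda>e. fst e = i) h)" by (rule hd_in_set)
    then show ?thesis using w True unfolding wfh_def by auto
  next
    case False then show ?thesis using fin[OF i] by (auto intro: someI_ex)
  qed
  then show ?thesis unfolding xin_def tuples_def by auto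
qed

lemma xin_snoc: "i \<notin> fst ` set h \<Longrightarrow> i < n \<Longrightarrow> xin (h @ [(i, \<xi>, \<alpha>)]) = (xin h)(i := \<xi>)"
proof -
  assume ni: "i \<notin> fst ` set h" and i: "i < n"
  have "filter (\<lambda>e. fst e = i) h = []" using ni by (auto simp: filter_empty_conv)
  then show ?thesis unfolding xin_def using i by (auto simp: fun_eq_iff)
qed

lemma inputs_of_xin: "valid_strategy n ins \<sigma> \<Longrightarrow> inputs_of n \<sigma> a = xin (run \<sigma> a n)"
  unfolding inputs_of_def xin_def using run_full by (auto simp: fun_eq_iff)

lemma agrees_run: "agrees a (run \<sigma> a k)"
  unfolding agrees_def using run_out by metis

lemma ns_swap:
  assumes st: "is_state n ins outs p" and i: "i < n" and A: "A \<subseteq> TO"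
    and cl: "\<And>a c. a \<in> A \<Longrightarrow> c \<in> outs i \<Longrightarrow> a(i := c) \<in> A"
    and x: "x \<in> TI" and y: "y \<in> ins i"
  shows "(\<Sum>a\<in>A. p a x) = (\<Sum>a\<in>A. p a (x(i := y)))"
proof -
  have finA: "finite A" using A finTO finite_subset by blast
  have fo: "finite (outs i)" "outs i \<noteq> {}" using fin[OF i] by auto
  have ai: "a i \<in> outs i" if "a \<in> A" for a using A that tuples_mem[OF _ i] by blast
  have key: "(\<Sum>a\<in>A. \<Sum>c\<in>outs i. g (a(i := c))) = real (card (outs i)) * (\<Sum>a\<in>A. g a)" for g :: "(nat\<Rightarrow>nat) \<Rightarrow> real"
  proof -
    have bij: "bij_betw (\<lambda>(a, c). (a(i := c), a i)) (A \<times> outs i) (A \<times> outs i)"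
      by (rule bij_betw_byWitness[where f'="\<lambda>(a, c). (a(i := c), a i)"]) (auto simp: cl ai)
    have "(\<Sum>a\<in>A. \<Sum>c\<in>outs i. g (a(i := c))) = (\<Sum>(a, c)\<in>A \<times> outs i. g (a(i := c)))"
      by (simp add: sum.cartesian_product)
    also have "\<dots> = (\<Sum>(a, c)\<in>A \<times> outs i. g a)"
      using sum.reindex_bij_betw[OF bij, of "\<lambda>(a, c). g a"] by (simp add: case_prod_beta)
    also have "\<dots> = real (card (outs i)) * (\<Sum>a\<in>A. g a)"
      by (simp add: sum.cartesian_product[symmetric]) (simp add: sum_distrib_left)
    finally show ?thesis .
  qed
  have "(\<Sum>a\<in>A. \<Sum>c\<in>outs i. p (a(i := c)) x) = (\<Sum>a\<in>A. \<Sum>c\<in>outs i. p (a(i := c)) (x(i := y)))"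
  proof (rule sum.cong[OF refl])
    fix a assume "a \<in> A"
    then have "a \<in> TO" using A by auto
    then show "(\<Sum>c\<in>outs i. p (a(i := c)) x) = (\<Sum>c\<in>outs i. p (a(i := c)) (x(i := y)))"
      using st i x y unfolding is_state_def by blast
  qed
  then have "real (card (outs i)) * (\<Sum>a\<in>A. p a x) = real (card (outs i)) * (\<Sum>a\<in>A. p a (x(i := y)))"
    using key[of "\<lambda>a. p a x"] key[of "\<lambda>a. p a (x(i := y))"] by metis
  moreover have "real (card (outs i)) \<noteq> 0" using fo by simp
  ultimately show ?thesis by simp
qed

lemma Pm_step:
  assumes st: "is_state n ins outs p" and w: "wfh n ins h" and i: "i < n" and ni: "i \<notin> fst ` set h"
    and \<xi>: "\<xi> \<in> ins i"
  shows "(\<Sum>\<alpha>\<in>outs i. Pm p (h @ [(i, \<xi>, \<alpha>)])) = Pm p h"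
proof -
  let ?A = "{a\<in>TO. agrees a h}"
  have fo: "finite (outs i)" using fin[OF i] by auto
  have "(\<Sum>\<alpha>\<in>outs i. Pm p (h @ [(i, \<xi>, \<alpha>)])) = (\<Sum>\<alpha>\<in>outs i. \<Sum>a\<in>{a\<in>?A. a i = \<alpha>}. p a ((xin h)(i := \<xi>)))"
    unfolding Pm_def xin_snoc[OF ni i] agrees_def by (intro sum.cong refl) auto
  also have "\<dots> = (\<Sum>a\<in>?A. p a ((xin h)(i := \<xi>)))"
    by (rule sum.group) (use finTO fo tuples_mem[OF _ i] in auto)
  also have "\<dots> = (\<Sum>a\<in>?A. p a (((xin h)(i := \<xi>))(i := xin h i)))"
  proof (rule ns_swap[OF st i])
    show "?A \<subseteq> TO" by auto
    show "\<And>a c. a \<in> ?A \<Longrightarrow> c \<in> outs i \<Longrightarrow> a(i := c) \<in> ?A"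
      using ni i by (auto simp: agrees_def tuples_upd)
    show "(xin h)(i := \<xi>) \<in> TI" using xin_TI[OF w] tuples_upd i \<xi> by blast
    show "xin h i \<in> ins i" using xin_TI[OF w] tuples_mem i by blast
  qed
  also have "\<dots> = Pm p h" unfolding Pm_def by simp
  finally show ?thesis .
qed

lemma Pm_nil: "is_state n ins outs p \<Longrightarrow> Pm p [] = 1"
  unfolding Pm_def agrees_def using xin_TI[of "[]"] unfolding is_state_def wfh_def by auto

lemma Pm_nonneg: "is_state n ins outs p \<Longrightarrow> wfh n ins h \<Longrightarrow> 0 \<le> Pm p h"
  unfolding Pm_def is_state_def using xin_TI by (auto intro!: sum_nonneg)

lemma Pm_full:
  assumes full: "fst ` set h = {..<n}" and a0: "a0 \<in> TO" and ag: "agrees a0 h"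
  shows "Pm p h = p a0 (xin h)"
proof -
  have "{a\<in>TO. agrees a h} = {a0}"
  proof safe
    fix a assume a: "a \<in> TO" "agrees a h"
    show "a = a0"
    proof (rule tuples_eqI[OF a(1) a0])
      fix i assume "i < n"
        then have "i \<in> fst ` set h" using full by auto
      then obtain e where "e \<in> set h" "fst e = i" by auto
      then show "a i = a0 i" using a(2) ag unfolding agrees_def by auto
    qed
  qed (use a0 ag in auto)
  then show ?thesis unfolding Pm_def by simp
qed

end



definition phi :: "real \<Rightarrow> real" where
  "phi t = (if t = 0 then 0 else - (t * log 2 t))"

lemma phi_mult: "0 \<le> u \<Longrightarrow> 0 \<le> v \<Longrightarrow> phi (u * v) = v * phi u + u * phi v"
  unfolding phi_def by (auto simp: log_mult algebra_simps)

context sys begin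

definition TS :: "strategy \<Rightarrow> ((nat \<Rightarrow> nat) \<Rightarrow> real) \<Rightarrow> (nat \<times> nat \<times> nat) list \<Rightarrow> real" where
  "TS \<sigma> F h = (\<Sum>a\<in>{a\<in>TO. run \<sigma> a (length h) = h}. F a)"

lemma valid_step:
  assumes v: "valid_strategy n ins \<sigma>" and w: "wfh n ins h" and l: "length h < n"
  shows "fst (\<sigma> h) < n \<and> fst (\<sigma> h) \<notin> fst ` set h \<and> snd (\<sigma> h) \<in> ins (fst (\<sigma> h))"
  using v w l unfolding valid_strategy_def wfh_def by auto

lemma TS_split:
  assumes v: "valid_strategy n ins \<sigma>" and w: "wfh n ins h" and l: "length h < n" and s: "\<sigma> h = (i, \<xi>)"
  shows "TS \<sigma> F h = (\<Sum>\<alpha>\<in>outs i. TS \<sigma> F (h @ [(i, \<xi>, \<alpha>)]))"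
proof -
  have i: "i < n" using valid_step[OF v w l] s by simp
  have fo: "finite (outs i)" using fin[OF i] by auto
  have eq: "{a\<in>TO. run \<sigma> a (length (h @ [(i, \<xi>, \<alpha>)])) = h @ [(i, \<xi>, \<alpha>)]} = {a\<in>{a\<in>TO. run \<sigma> a (length h) = h}. a i = \<alpha>}" for \<alpha>
    using s by (auto simp: Let_def)
  show ?thesis unfolding TS_def eq
    by (rule sum.group[symmetric]) (use finTO fo tuples_mem[OF _ i] in auto)
qed

lemma TS_child:
  assumes v: "valid_strategy n ins \<sigma>" and a0: "a0 \<in> TO" and k: "k < n" and s: "\<sigma> (run \<sigma> a0 k) = (i, \<xi>)"
    and \<alpha>: "\<alpha> \<in> outs i"
  shows "run \<sigma> a0 k @ [(i, \<xi>, \<alpha>)] = run \<sigma> (a0(i := \<alpha>)) (Suc k)" and "a0(i := \<alpha>) \<in> TO"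
proof -
  have w: "wfh n ins (run \<sigma> a0 k)" using run_wf[OF v] k by simp
  have i: "i < n" "i \<notin> fst ` set (run \<sigma> a0 k)" using valid_step[OF v w] k s by auto
  have r: "run \<sigma> (a0(i := \<alpha>)) k = run \<sigma> a0 k" by (rule run_dep) (use i in auto)
  show "run \<sigma> a0 k @ [(i, \<xi>, \<alpha>)] = run \<sigma> (a0(i := \<alpha>)) (Suc k)"
    unfolding run_Suc' r s by simp
  show "a0(i := \<alpha>) \<in> TO" using tuples_upd a0 i \<alpha> by blast
qed

lemma TS_leaf:
  assumes v: "valid_strategy n ins \<sigma>" and a0: "a0 \<in> TO"
  shows "TS \<sigma> F (run \<sigma> a0 n) = F a0"
proof -
  have "{a\<in>TO. run \<sigma> a n = run \<sigma> a0 n} = {a0}"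
  proof safe
    fix a assume a: "a \<in> TO" "run \<sigma> a n = run \<sigma> a0 n"
    show "a = a0"
    proof (rule tuples_eqI[OF a(1) a0])
      fix i assume "i < n"
      then have "i \<in> fst ` set (run \<sigma> a0 n)" using run_full[OF v] by auto
      then obtain e where e: "e \<in> set (run \<sigma> a0 n)" "fst e = i" by auto
      then show "a i = a0 i" using run_out[OF e(1)] run_out[of e \<sigma> a n] a(2) by auto
    qed
  qed (use a0 in auto)
  then show ?thesis unfolding TS_def by simp
qed

lemma normalization:
  assumes v: "valid_strategy n ins \<sigma>" and st: "is_state n ins outs p"
  shows "(\<Sum>a\<in>TO. p a (inputs_of n \<sigma> a)) = 1"
proof -
  let ?F = "\<lambda>a. p a (inputs_of n \<sigma> a)"
  have claim: "\<forall>a0\<in>TO. TS \<sigma> ?F (run \<sigma> a0 (n - d)) = Pm p (run \<sigma> a0 (n - d))" if "d \<le> n" for d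
    using that
  proof (induction d)
    case 0
    show ?case
    proof
      fix a0 assume a0: "a0 \<in> TO"
      show "TS \<sigma> ?F (run \<sigma> a0 (n - 0)) = Pm p (run \<sigma> a0 (n - 0))"
        using TS_leaf[OF v a0] Pm_full[OF run_full[OF v] a0 agrees_run] inputs_of_xin[OF v] by simp
    qed
  next
    case (Suc d)
    show ?case
    proof
      fix a0 assume a0: "a0 \<in> TO"
      define k where "k = n - Suc d"
      have k: "k < n" "Suc k = n - d" using Suc.prems unfolding k_def by auto
      define h where "h = run \<sigma> a0 k"
      obtain i \<xi> where s: "\<sigma> h = (i, \<xi>)" by fastforce
      have w: "wfh n ins h" unfolding h_def using run_wf[OF v] k by simp
      have vs: "i < n" "i \<notin> fst ` set h" "\<xi> \<in> ins i" using valid_step[OF v w] k s unfolding h_def by auto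
      have "TS \<sigma> ?F h = (\<Sum>\<alpha>\<in>outs i. TS \<sigma> ?F (h @ [(i, \<xi>, \<alpha>)]))"
        using TS_split[OF v w _ s] k unfolding h_def by simp
      also have "\<dots> = (\<Sum>\<alpha>\<in>outs i. Pm p (h @ [(i, \<xi>, \<alpha>)]))"
      proof (rule sum.cong[OF refl])
        fix \<alpha> assume \<alpha>: "\<alpha> \<in> outs i"
        have c: "h @ [(i, \<xi>, \<alpha>)] = run \<sigma> (a0(i := \<alpha>)) (n - d)" "a0(i := \<alpha>) \<in> TO"
          using TS_child[OF v a0 k(1) _ \<alpha>] s k unfolding h_def by auto
        show "TS \<sigma> ?F (h @ [(i, \<xi>, \<alpha>)]) = Pm p (h @ [(i, \<xi>, \<alpha>)])"
          using Suc.IH Suc.prems c by simp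
      qed
      also have "\<dots> = Pm p h" by (rule Pm_step[OF st w vs])
      finally show "TS \<sigma> ?F (run \<sigma> a0 (n - Suc d)) = Pm p (run \<sigma> a0 (n - Suc d))"
        unfolding h_def k_def .
    qed
  qed
  obtain a0 where a0: "a0 \<in> TO" using TO_ne by auto
  have "TS \<sigma> ?F [] = Pm p []" using claim[of n] a0 by auto
  then show ?thesis unfolding TS_def using Pm_nil[OF st] by simp
qed

definition CS :: "(nat \<times> nat \<times> nat) list \<Rightarrow> (nat \<times> nat) set" where
  "CS h = {c. fst c < n \<and> fst c \<notin> fst ` set h \<and> snd c \<in> ins (fst c)}"

lemma CS_finite: "finite (CS h)"
proof -
  have "CS h \<subseteq> Sigma {..<n} ins" unfolding CS_def by auto
  moreover have "finite (Sigma {..<n} ins)" using fin by (intro finite_SigmaI) auto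
  ultimately show ?thesis using finite_subset by blast
qed

lemma CS_ne:
  assumes "distinct (map fst h)" "set (map fst h) \<subseteq> {..<n}" "length h < n"
  shows "CS h \<noteq> {}"
proof -
  have "card (fst ` set h) = length h" using assms(1) by (metis distinct_card length_map set_map)
  then have "fst ` set h \<noteq> {..<n}" using assms(3) by auto
  then obtain i where i: "i < n" "i \<notin> fst ` set h" using assms(2) by auto
  then obtain \<xi> where "\<xi> \<in> ins i" using fin[OF i(1)] by auto
  then have "(i, \<xi>) \<in> CS h" unfolding CS_def using i by auto
  then show ?thesis by auto
qed

primrec Uv :: "bstate \<Rightarrow> nat \<Rightarrow> (nat \<times> nat \<times> nat) list \<Rightarrow> real" where
  "Uv p 0 h = phi (Pm p h)"
| "Uv p (Suc k) h = Min ((\<lambda>c. \<Sum>\<alpha>\<in>outs (fst c). Uv p k (h @ [(fst c, snd c, \<alpha>)])) ` CS h)"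

lemma Uv_le: "c \<in> CS h \<Longrightarrow> Uv p (Suc k) h \<le> (\<Sum>\<alpha>\<in>outs (fst c). Uv p k (h @ [(fst c, snd c, \<alpha>)]))"
  using CS_finite by (simp add: Min_le)

definition sopt :: "bstate \<Rightarrow> strategy" where
  "sopt p h = (SOME c. c \<in> CS h \<and>
     (\<Sum>\<alpha>\<in>outs (fst c). Uv p (n - Suc (length h)) (h @ [(fst c, snd c, \<alpha>)])) = Uv p (n - length h) h)"

lemma sopt_prop:
  assumes "distinct (map fst h)" "set (map fst h) \<subseteq> {..<n}" "length h < n"
  shows "sopt p h \<in> CS h \<and>
     (\<Sum>\<alpha>\<in>outs (fst (sopt p h)). Uv p (n - Suc (length h)) (h @ [(fst (sopt p h), snd (sopt p h), \<alpha>)])) = Uv p (n - length h) h"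
proof -
  have e: "n - length h = Suc (n - Suc (length h))" using assms(3) by simp
  have "Uv p (n - length h) h \<in> (\<lambda>c. \<Sum>\<alpha>\<in>outs (fst c). Uv p (n - Suc (length h)) (h @ [(fst c, snd c, \<alpha>)])) ` CS h"
    unfolding e Uv.simps using CS_finite CS_ne[OF assms] by (intro Min_in) auto
  then obtain c where c: "c \<in> CS h" and
     cv: "Uv p (n - length h) h = (\<Sum>\<alpha>\<in>outs (fst c). Uv p (n - Suc (length h)) (h @ [(fst c, snd c, \<alpha>)]))"
    by (rule imageE)
  show ?thesis unfolding sopt_def by (rule someI[where x=c]) (use c cv in simp)
qed

lemma sopt_valid: "valid_strategy n ins (sopt p)"
  unfolding valid_strategy_def
proof (intro allI impI)
  fix h :: "(nat \<times> nat \<times> nat) list" assume "distinct (map fst h) \<and> set (map fst h) \<subseteq> {..<n} \<and> length h < n"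
  then have "sopt p h \<in> CS h" using sopt_prop by blast
  then show "fst (sopt p h) < n \<and> fst (sopt p h) \<notin> set (map fst h) \<and> snd (sopt p h) \<in> ins (fst (sopt p h))"
    unfolding CS_def by auto
qed

definition Hs :: "strategy \<Rightarrow> bstate \<Rightarrow> real" where
  "Hs \<sigma> p = (\<Sum>a\<in>TO. phi (p a (inputs_of n \<sigma> a)))"

lemma Hs_bounds:
  assumes v: "valid_strategy n ins \<sigma>" and st: "is_state n ins outs p"
  shows "Uv p n [] \<le> Hs \<sigma> p" and "\<sigma> = sopt p \<Longrightarrow> Hs \<sigma> p = Uv p n []"
proof -
  let ?F = "\<lambda>a. phi (p a (inputs_of n \<sigma> a))"
  have claim: "\<forall>a0\<in>TO. Uv p d (run \<sigma> a0 (n - d)) \<le> TS \<sigma> ?F (run \<sigma> a0 (n - d)) \<and>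
                (\<sigma> = sopt p \<longrightarrow> TS \<sigma> ?F (run \<sigma> a0 (n - d)) = Uv p d (run \<sigma> a0 (n - d)))" if "d \<le> n" for d
    using that
  proof (induction d)
    case 0
    show ?case
    proof
      fix a0 assume a0: "a0 \<in> TO"
      have "TS \<sigma> ?F (run \<sigma> a0 (n - 0)) = Uv p 0 (run \<sigma> a0 (n - 0))"
        using TS_leaf[OF v a0] Pm_full[OF run_full[OF v] a0 agrees_run] inputs_of_xin[OF v] by simp
      then show "Uv p 0 (run \<sigma> a0 (n - 0)) \<le> TS \<sigma> ?F (run \<sigma> a0 (n - 0)) \<and>
                (\<sigma> = sopt p \<longrightarrow> TS \<sigma> ?F (run \<sigma> a0 (n - 0)) = Uv p 0 (run \<sigma> a0 (n - 0)))" by (metis order_refl)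
    qed
  next
    case (Suc d)
    show ?case
    proof
      fix a0 assume a0: "a0 \<in> TO"
      define k where "k = n - Suc d"
      have k: "k < n" "Suc k = n - d" using Suc.prems unfolding k_def by auto
      define h where "h = run \<sigma> a0 k"
      obtain i \<xi> where s: "\<sigma> h = (i, \<xi>)" by fastforce
      have w: "wfh n ins h" unfolding h_def using run_wf[OF v] k by simp
      have vs: "i < n" "i \<notin> fst ` set h" "\<xi> \<in> ins i" using valid_step[OF v w] k s unfolding h_def by auto
      have cs: "(i, \<xi>) \<in> CS h" unfolding CS_def using vs by auto
      have ch: "TS \<sigma> ?F (h @ [(i, \<xi>, \<alpha>)]) \<ge> Uv p d (h @ [(i, \<xi>, \<alpha>)]) \<and>
          (\<sigma> = sopt p \<longrightarrow> TS \<sigma> ?F (h @ [(i, \<xi>, \<alpha>)]) = Uv p d (h @ [(i, \<xi>, \<alpha>)]))" if \<alpha>: "\<alpha> \<in> outs i" for \<alpha>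
      proof -
        have c: "h @ [(i, \<xi>, \<alpha>)] = run \<sigma> (a0(i := \<alpha>)) (n - d)" "a0(i := \<alpha>) \<in> TO"
          using TS_child[OF v a0 k(1) _ \<alpha>] s k unfolding h_def by auto
        show ?thesis using Suc.IH Suc.prems c by simp
      qed
      have T: "TS \<sigma> ?F h = (\<Sum>\<alpha>\<in>outs i. TS \<sigma> ?F (h @ [(i, \<xi>, \<alpha>)]))"
        using TS_split[OF v w _ s] k unfolding h_def by simp
      have "Uv p (Suc d) h \<le> (\<Sum>\<alpha>\<in>outs i. Uv p d (h @ [(i, \<xi>, \<alpha>)]))"
        using Uv_le[OF cs] by simp
      also have "\<dots> \<le> TS \<sigma> ?F h" unfolding T using ch by (intro sum_mono) auto
      finally have le: "Uv p (Suc d) h \<le> TS \<sigma> ?F h" .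
      have eq: "TS \<sigma> ?F h = Uv p (Suc d) h" if so: "\<sigma> = sopt p"
      proof -
        have w': "distinct (map fst h)" "set (map fst h) \<subseteq> {..<n}" "length h < n"
          using w k unfolding wfh_def h_def by auto
        have "n - Suc (length h) = d" "n - length h = Suc d" using k unfolding h_def by auto
        then have "(\<Sum>\<alpha>\<in>outs i. Uv p d (h @ [(i, \<xi>, \<alpha>)])) = Uv p (Suc d) h"
          using sopt_prop[OF w', of p] s so by simp
        moreover have "TS \<sigma> ?F h = (\<Sum>\<alpha>\<in>outs i. Uv p d (h @ [(i, \<xi>, \<alpha>)]))"
          unfolding T using ch so by (intro sum.cong) auto
        ultimately show ?thesis by simp
      qed
      show "Uv p (Suc d) (run \<sigma> a0 (n - Suc d)) \<le> TS \<sigma> ?F (run \<sigma> a0 (n - Suc d)) \<and>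
          (\<sigma> = sopt p \<longrightarrow> TS \<sigma> ?F (run \<sigma> a0 (n - Suc d)) = Uv p (Suc d) (run \<sigma> a0 (n - Suc d)))"
        using le eq unfolding h_def k_def by auto
    qed
  qed
  obtain a0 where a0: "a0 \<in> TO" using TO_ne by auto
  have r: "Uv p n [] \<le> TS \<sigma> ?F [] \<and> (\<sigma> = sopt p \<longrightarrow> TS \<sigma> ?F [] = Uv p n [])"
    using claim[of n] a0 by auto
  have "TS \<sigma> ?F [] = Hs \<sigma> p" unfolding TS_def Hs_def by simp
  then show "Uv p n [] \<le> Hs \<sigma> p" and "\<sigma> = sopt p \<Longrightarrow> Hs \<sigma> p = Uv p n []" using r by auto
qed

end


context sys begin

lemma fiber_inj: "inj_on r TO \<Longrightarrow> a0 \<in> TO \<Longrightarrow> {a\<in>TO. r a = r a0} = {a0}"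
  by (auto simp: inj_on_def)

lemma basic_is_meas:
  assumes v: "valid_strategy n ins \<sigma>"
  shows "is_measurement n ins outs (basic_meas n outs \<sigma> r)"
  unfolding is_measurement_def basic_meas_def fst_conv snd_conv
proof (intro conjI ballI allI impI)
  show "finite (r ` TO)" using finTO by simp
next
  fix k assume k: "k \<in> r ` TO"
  define R where "R a x = (if r a = k \<and> x = inputs_of n \<sigma> a then 1 else 0 :: real)" for a x
  show "is_effect n ins outs (\<lambda>p. \<Sum>a\<in>{a \<in> TO. r a = k}. p a (inputs_of n \<sigma> a))"
    unfolding is_effect_def
  proof (intro conjI exI[of _ R] allI impI)
    fix p assume st: "is_state n ins outs p"
    have "(\<Sum>a\<in>TO. \<Sum>x\<in>TI. p a x * R a x) = (\<Sum>a\<in>TO. if r a = k then p a (inputs_of n \<sigma> a) else 0)"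
    proof (rule sum.cong[OF refl])
      fix a assume "a \<in> TO"
      have "(\<Sum>x\<in>TI. p a x * R a x) = (\<Sum>x\<in>TI. if x = inputs_of n \<sigma> a then (if r a = k then p a x else 0) else 0)"
        unfolding R_def by (rule sum.cong) auto
      also have "\<dots> = (if r a = k then p a (inputs_of n \<sigma> a) else 0)"
        using inputs_of_TI[OF v] finTI by (simp add: sum.delta')
      finally show "(\<Sum>x\<in>TI. p a x * R a x) = (if r a = k then p a (inputs_of n \<sigma> a) else 0)" .
    qed
    also have "\<dots> = (\<Sum>a\<in>{a \<in> TO. r a = k}. p a (inputs_of n \<sigma> a))"
      using finTO by (simp add: sum.inter_filter)
    finally show "(\<Sum>a\<in>{a \<in> TO. r a = k}. p a (inputs_of n \<sigma> a)) = (\<Sum>a\<in>TO. \<Sum>x\<in>TI. p a x * R a x)" by simp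
  next
    fix p assume st: "is_state n ins outs p"
    have nn: "\<And>a. a \<in> TO \<Longrightarrow> 0 \<le> p a (inputs_of n \<sigma> a)"
      using st inputs_of_TI[OF v] unfolding is_state_def by blast
    show "0 \<le> (\<Sum>a\<in>{a \<in> TO. r a = k}. p a (inputs_of n \<sigma> a))" using nn by (intro sum_nonneg) auto
    have "(\<Sum>a\<in>{a \<in> TO. r a = k}. p a (inputs_of n \<sigma> a)) \<le> (\<Sum>a\<in>TO. p a (inputs_of n \<sigma> a))"
      using nn finTO by (intro sum_mono2) auto
    then show "(\<Sum>a\<in>{a \<in> TO. r a = k}. p a (inputs_of n \<sigma> a)) \<le> 1" using normalization[OF v st] by simp
  qed
next
  fix p assume st: "is_state n ins outs p"
  have "(\<Sum>k\<in>r ` TO. \<Sum>a\<in>{a \<in> TO. r a = k}. p a (inputs_of n \<sigma> a)) = (\<Sum>a\<in>TO. p a (inputs_of n \<sigma> a))"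
    by (rule sum.group) (use finTO in auto)
  then show "(\<Sum>k\<in>r ` TO. \<Sum>a\<in>{a \<in> TO. r a = k}. p a (inputs_of n \<sigma> a)) = 1" using normalization[OF v st] by simp
qed

lemma inj_maxinf:
  assumes v: "valid_strategy n ins \<sigma>" and inj: "inj_on r TO"
  shows "max_informative n ins outs (basic_meas n outs \<sigma> r)"
  unfolding max_informative_def
proof (intro conjI allI impI)
  show "is_measurement n ins outs (basic_meas n outs \<sigma> r)" by (rule basic_is_meas[OF v])
  fix N f assume Nf: "is_measurement n ins outs N \<and> refinement_via n ins outs N (basic_meas n outs \<sigma> r) f"
  let ?M = "basic_meas n outs \<sigma> r"
  show "trivial_via n ins outs N ?M f"
    unfolding trivial_via_def
  proof
    fix s assume s: "s \<in> fst N"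
    have "f s \<in> r ` TO" using Nf s unfolding refinement_via_def basic_meas_def by auto
    then obtain a0 where a0: "a0 \<in> TO" and fs: "f s = r a0" by auto
    have Mv: "snd ?M (f s) p = p a0 (inputs_of n \<sigma> a0)" for p
      unfolding basic_meas_def snd_conv fs fiber_inj[OF inj a0] by simp
    have finN: "finite (fst N)" using Nf unfolding is_measurement_def by auto
    have effs: "\<And>s'. s' \<in> fst N \<Longrightarrow> is_effect n ins outs (snd N s')" using Nf unfolding is_measurement_def by auto
    obtain R where R: "\<forall>p. is_state n ins outs p \<longrightarrow> snd N s p = Lin n ins outs R p"
      using effs[OF s] unfolding is_effect_def Lin_def by auto
    have bnd: "\<forall>p. is_state n ins outs p \<longrightarrow> 0 \<le> snd N s p \<and> snd N s p \<le> p a0 (inputs_of n \<sigma> a0)"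
    proof (intro allI impI conjI)
      fix p assume st: "is_state n ins outs p"
      show "0 \<le> snd N s p" using effs[OF s] st unfolding is_effect_def by auto
      have ref: "snd ?M (f s) p = (\<Sum>s'\<in>{s'\<in>fst N. f s' = f s}. snd N s' p)"
        using Nf \<open>f s \<in> r ` TO\<close> st unfolding refinement_via_def basic_meas_def by auto
      have "snd N s p \<le> (\<Sum>s'\<in>{s'\<in>fst N. f s' = f s}. snd N s' p)"
        using finN s effs st unfolding is_effect_def by (intro member_le_sum) auto
      then show "snd N s p \<le> p a0 (inputs_of n \<sigma> a0)" using ref Mv by simp
    qed
    obtain c where c: "\<forall>p. is_state n ins outs p \<longrightarrow> snd N s p = c * p a0 (inputs_of n \<sigma> a0)"
      using extremal[OF fin a0 inputs_of_TI[OF v] R bnd] by auto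
    show "\<exists>c. \<forall>p. is_state n ins outs p \<longrightarrow> snd N s p = c * snd ?M (f s) p"
      using c Mv by auto
  qed
qed

definition fconst :: "(nat \<Rightarrow> nat) \<Rightarrow> nat \<Rightarrow> nat \<Rightarrow> nat" where
  "fconst b = restrict (\<lambda>i. restrict (\<lambda>_. b i) (ins i)) {..<n}"

lemma fconst_dets: "b \<in> TO \<Longrightarrow> fconst b \<in> dets n ins outs"
  unfolding fconst_def dets_def using tuples_mem by fastforce

lemma fconst_val: "b \<in> TO \<Longrightarrow> a \<in> TO \<Longrightarrow> x \<in> TI \<Longrightarrow> Dst n (fconst b) a x = (if a = b then 1 else 0)"
proof -
  assume b: "b \<in> TO" and a: "a \<in> TO" and x: "x \<in> TI"
  have "(\<forall>i<n. a i = fconst b i (x i)) = (\<forall>i<n. a i = b i)"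
    unfolding fconst_def using tuples_mem[OF x] by auto
  also have "\<dots> = (a = b)" using tuples_eqI[OF a b] by auto
  finally show ?thesis unfolding Dst_def by simp
qed

lemma maxinf_inj:
  assumes v: "valid_strategy n ins \<sigma>" and mi: "max_informative n ins outs (basic_meas n outs \<sigma> r)"
  shows "inj_on r TO"
proof (rule ccontr)
  assume "\<not> inj_on r TO"
  then obtain a1 a2 where a: "a1 \<in> TO" "a2 \<in> TO" "a1 \<noteq> a2" "r a1 = r a2" unfolding inj_on_def by auto
  obtain g :: "(nat \<Rightarrow> nat) \<Rightarrow> nat" and m where g: "g ` TO = {i. i < m}" "inj_on g TO"
    using finite_imp_inj_to_nat_seg[OF finTO] by blast
  let ?M = "basic_meas n outs \<sigma> r" and ?N = "basic_meas n outs \<sigma> g"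
  let ?f = "\<lambda>s. r (inv_into TO g s)"
  have Nv: "snd ?N (g a) p = p a (inputs_of n \<sigma> a)" if "a \<in> TO" for a p
    unfolding basic_meas_def snd_conv fiber_inj[OF g(2) that] by simp
  have ref: "refinement_via n ins outs ?N ?M ?f"
    unfolding refinement_via_def
  proof (intro conjI ballI allI impI)
    fix s assume "s \<in> fst ?N"
    then show "?f s \<in> fst ?M" unfolding basic_meas_def by (auto simp: inv_into_f_f[OF g(2)])
  next
    fix k p assume k: "k \<in> fst ?M" and st: "is_state n ins outs p"
    have e: "{s \<in> fst ?N. ?f s = k} = g ` {a\<in>TO. r a = k}"
      unfolding basic_meas_def by (auto simp: inv_into_f_f[OF g(2)])
    have inj2: "inj_on g {a\<in>TO. r a = k}" using g(2) by (rule inj_on_subset) auto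
    have "(\<Sum>s\<in>{s \<in> fst ?N. ?f s = k}. snd ?N s p) = (\<Sum>a\<in>{a\<in>TO. r a = k}. snd ?N (g a) p)"
      unfolding e by (rule sum.reindex[OF inj2, unfolded comp_def])
    also have "\<dots> = snd ?M k p" unfolding basic_meas_def snd_conv using Nv
      by (intro sum.cong refl) (auto simp: basic_meas_def fiber_inj[OF g(2)])
    finally show "snd ?M k p = (\<Sum>s\<in>{s \<in> fst ?N. ?f s = k}. snd ?N s p)" by simp
  qed
  have "trivial_via n ins outs ?N ?M ?f"
    using mi basic_is_meas[OF v] ref unfolding max_informative_def by blast
  then obtain c where c: "\<forall>p. is_state n ins outs p \<longrightarrow> snd ?N (g a1) p = c * snd ?M (?f (g a1)) p"
  proof -
    have "trivial_via n ins outs ?N ?M ?f" by fact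
    moreover have "g a1 \<in> fst ?N" unfolding basic_meas_def using a(1) by simp
    ultimately show ?thesis using that unfolding trivial_via_def by blast
  qed
  have fa1: "?f (g a1) = r a1" using inv_into_f_f[OF g(2) a(1)] by simp
  have Mv: "snd ?M (r a1) (Dst n (fconst b)) = 1" if "b \<in> TO" "r b = r a1" for b
  proof -
    have "snd ?M (r a1) (Dst n (fconst b)) = (\<Sum>a\<in>{a\<in>TO. r a = r a1}. if a = b then 1 else 0)"
      unfolding basic_meas_def snd_conv using fconst_val[OF that(1) _ inputs_of_TI[OF v]]
      by (intro sum.cong refl) auto
    also have "\<dots> = 1" using that finTO by (simp add: sum.delta)
    finally show ?thesis .
  qed
  have st1: "is_state n ins outs (Dst n (fconst a1))" and st2: "is_state n ins outs (Dst n (fconst a2))"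
    using Dst_state[OF fin fconst_dets] a by auto
  have "snd ?N (g a1) (Dst n (fconst a2)) = 0"
    using Nv[OF a(1)] fconst_val[OF a(2) a(1) inputs_of_TI[OF v]] a(3) by simp
  then have "c = 0" using c st2 fa1 Mv[OF a(2)] a(4) by simp
  moreover have "snd ?N (g a1) (Dst n (fconst a1)) = 1"
    using Nv[OF a(1)] fconst_val[OF a(1) a(1) inputs_of_TI[OF v]] by simp
  then have "c = 1" using c st1 fa1 Mv[OF a(1)] by simp
  ultimately show False by simp
qed

lemma HM_Hs: "inj_on r TO \<Longrightarrow> H_M (basic_meas n outs \<sigma> r) p = Hs \<sigma> p"
proof -
  assume inj: "inj_on r TO"
  have q: "(\<Sum>a\<in>{a \<in> TO. r a = r b}. p a (inputs_of n \<sigma> a)) = p b (inputs_of n \<sigma> b)" if "b \<in> TO" for b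
    using fiber_inj[OF inj that] by simp
  have "H_M (basic_meas n outs \<sigma> r) p = - (\<Sum>b\<in>TO.
      if (\<Sum>a\<in>{a \<in> TO. r a = r b}. p a (inputs_of n \<sigma> a)) = 0 then 0
      else (\<Sum>a\<in>{a \<in> TO. r a = r b}. p a (inputs_of n \<sigma> a)) * log 2 (\<Sum>a\<in>{a \<in> TO. r a = r b}. p a (inputs_of n \<sigma> a)))"
    unfolding H_M_def shannon_def basic_meas_def fst_conv snd_conv
    by (subst sum.reindex[OF inj]) (simp add: comp_def)
  also have "\<dots> = Hs \<sigma> p" unfolding Hs_def
    by (subst sum_negf[symmetric]) (rule sum.cong, auto simp: phi_def q)
  finally show ?thesis .
qed

lemma Hbasic_eq: "H_basic n ins outs p = Inf {Hs \<sigma> p | \<sigma>. valid_strategy n ins \<sigma>}"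
proof -
  have "{H_M M p | M. is_basic n ins outs M \<and> max_informative n ins outs M} = {Hs \<sigma> p | \<sigma>. valid_strategy n ins \<sigma>}"
  proof safe
    fix M assume "is_basic n ins outs M" "max_informative n ins outs M"
    then obtain \<sigma> r where v: "valid_strategy n ins \<sigma>" and M: "M = basic_meas n outs \<sigma> r"
      and mi: "max_informative n ins outs (basic_meas n outs \<sigma> r)" unfolding is_basic_def by auto
    show "\<exists>\<sigma>. H_M M p = Hs \<sigma> p \<and> valid_strategy n ins \<sigma>"
      using HM_Hs[OF maxinf_inj[OF v mi]] M v by auto
  next
    fix \<sigma> assume v: "valid_strategy n ins \<sigma>"
    obtain g :: "(nat \<Rightarrow> nat) \<Rightarrow> nat" and m where g: "g ` TO = {i. i < m}" "inj_on g TO"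
      using finite_imp_inj_to_nat_seg[OF finTO] by blast
    show "\<exists>M. Hs \<sigma> p = H_M M p \<and> is_basic n ins outs M \<and> max_informative n ins outs M"
      using HM_Hs[OF g(2)] inj_maxinf[OF v g(2)] v unfolding is_basic_def
      by (intro exI[of _ "basic_meas n outs \<sigma> g"]) auto
  qed
  then show ?thesis unfolding H_basic_def by simp
qed

end


definition hX :: "nat \<Rightarrow> (nat \<times> nat \<times> nat) list \<Rightarrow> (nat \<times> nat \<times> nat) list" where
  "hX n h = filter (\<lambda>e. fst e < n) h"

definition shf :: "nat \<Rightarrow> nat \<times> nat \<times> nat \<Rightarrow> nat \<times> nat \<times> nat" where
  "shf n e = (fst e - n, snd e)"

definition hY :: "nat \<Rightarrow> (nat \<times> nat \<times> nat) list \<Rightarrow> (nat \<times> nat \<times> nat) list" where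
  "hY n h = map (shf n) (filter (\<lambda>e. \<not> fst e < n) h)"

lemma hX_snoc: "hX n (h @ [e]) = (if fst e < n then hX n h @ [e] else hX n h)"
  unfolding hX_def by simp

lemma hY_snoc: "hY n (h @ [e]) = (if fst e < n then hY n h else hY n h @ [shf n e])"
  unfolding hY_def by simp

lemma hXY_length: "length (hX n h) + length (hY n h) = length h"
  unfolding hX_def hY_def by (simp add: sum_length_filter_compl)

lemma boxes_hX: "fst ` set (hX n h) = {i \<in> fst ` set h. i < n}"
  unfolding hX_def by force

lemma boxes_hY: "fst ` set (hY n h) = (\<lambda>i. i - n) ` {i \<in> fst ` set h. \<not> i < n}"
  unfolding hY_def shf_def by force

lemma wfh_hX: "wfh (n + m) (join_sets n insX insY) h \<Longrightarrow> wfh n insX (hX n h)"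
  unfolding wfh_def hX_def join_sets_def by (auto simp: distinct_map_filter)

lemma wfh_hY: "wfh (n + m) (join_sets n insX insY) h \<Longrightarrow> wfh m insY (hY n h)"
proof -
  assume w: "wfh (n + m) (join_sets n insX insY) h"
  have d: "distinct (map fst (filter (\<lambda>e. \<not> fst e < n) h))"
    using w unfolding wfh_def by (auto simp: distinct_map_filter)
  have "map fst (hY n h) = map (\<lambda>i. i - n) (map fst (filter (\<lambda>e. \<not> fst e < n) h))"
    unfolding hY_def shf_def by simp
  moreover have "inj_on (\<lambda>i. i - n) (set (map fst (filter (\<lambda>e. \<not> fst e < n) h)))"
    by (auto simp: inj_on_def)
  ultimately have "distinct (map fst (hY n h))" using d by (auto simp: distinct_map intro: comp_inj_on)
  moreover have "set (map fst (hY n h)) \<subseteq> {..<m}" using w unfolding wfh_def hY_def shf_def by auto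
  moreover have "\<forall>e\<in>set (hY n h). fst (snd e) \<in> insY (fst e)"
    using w unfolding wfh_def hY_def shf_def join_sets_def by auto
  ultimately show ?thesis unfolding wfh_def by simp
qed

lemma filter_hX: "i < n \<Longrightarrow> filter (\<lambda>e. fst e = i) (hX n h) = filter (\<lambda>e. fst e = i) h"
  unfolding hX_def by (induction h) auto

lemma filter_hY: "filter (\<lambda>e. fst e = j) (hY n h) = map (shf n) (filter (\<lambda>e. fst e = n + j) h)"
  unfolding hY_def by (induction h) (auto simp: shf_def)

lemma left_join: "a \<in> tuples n S \<Longrightarrow> left_tup n (join_tup n m a b) = a"
  unfolding left_tup_def join_tup_def by (auto simp: fun_eq_iff tuples_out)

lemma right_join: "b \<in> tuples m S \<Longrightarrow> right_tup n m (join_tup n m a b) = b"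
  unfolding right_tup_def join_tup_def by (auto simp: fun_eq_iff tuples_out)

lemma left_mem: "c \<in> tuples (n + m) (join_sets n S T) \<Longrightarrow> left_tup n c \<in> tuples n S"
proof -
  assume c: "c \<in> tuples (n + m) (join_sets n S T)"
  have "c i \<in> S i" if "i < n" for i
    using tuples_mem[OF c, of i] that unfolding join_sets_def by simp
  then show ?thesis unfolding left_tup_def tuples_def by (simp add: restrict_PiE_iff)
qed

lemma right_mem: "c \<in> tuples (n + m) (join_sets n S T) \<Longrightarrow> right_tup n m c \<in> tuples m T"
proof -
  assume c: "c \<in> tuples (n + m) (join_sets n S T)"
  have "c (n + j) \<in> T j" if "j < m" for j
    using tuples_mem[OF c, of "n + j"] that unfolding join_sets_def by simp
  then show ?thesis unfolding right_tup_def tuples_def by (simp add: restrict_PiE_iff)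
qed

lemma join_mem: "a \<in> tuples n S \<Longrightarrow> b \<in> tuples m T \<Longrightarrow> join_tup n m a b \<in> tuples (n + m) (join_sets n S T)"
proof -
  assume a: "a \<in> tuples n S" and b: "b \<in> tuples m T"
  have "(if i < n then a i else b (i - n)) \<in> join_sets n S T i" if "i < n + m" for i
    using tuples_mem[OF a, of i] tuples_mem[OF b, of "i - n"] that unfolding join_sets_def by auto
  then show ?thesis unfolding join_tup_def tuples_def by (simp add: restrict_PiE_iff)
qed

lemma wfh_len_lt: "wfh n ins h \<Longrightarrow> i < n \<Longrightarrow> i \<notin> fst ` set h \<Longrightarrow> length h < n"
proof -
  assume w: "wfh n ins h" and i: "i < n" "i \<notin> fst ` set h"
  have "fst ` set h \<subseteq> {..<n} - {i}" using w i unfolding wfh_def by auto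
  then have "card (fst ` set h) \<le> card ({..<n} - {i})" by (intro card_mono) auto
  also have "\<dots> = n - 1" using i by simp
  finally have "card (fst ` set h) \<le> n - 1" .
  moreover have "card (fst ` set h) = length h" using w unfolding wfh_def by (metis distinct_card length_map set_map)
  ultimately show ?thesis using i by linarith
qed

lemma wfh_UNIV: "distinct (map fst h) \<Longrightarrow> set (map fst h) \<subseteq> {..<n} \<Longrightarrow> wfh n (\<lambda>_. UNIV) h"
  unfolding wfh_def by auto

lemma join_UNIV: "join_sets n (\<lambda>_. UNIV) (\<lambda>_. UNIV) = (\<lambda>_. UNIV)"
  unfolding join_sets_def by auto

locale joint =
  fixes n m :: nat and insX outsX insY outsY :: "nat \<Rightarrow> nat set" and pX pY :: bstate
  assumes finX: "\<And>i. i < n \<Longrightarrow> finite (insX i) \<and> insX i \<noteq> {} \<and> finite (outsX i) \<and> outsX i \<noteq> {}"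
    and finY: "\<And>j. j < m \<Longrightarrow> finite (insY j) \<and> insY j \<noteq> {} \<and> finite (outsY j) \<and> outsY j \<noteq> {}"
    and stX: "is_state n insX outsX pX"
    and stY: "is_state m insY outsY pY"
begin

sublocale X: sys n insX outsX using finX by unfold_locales
sublocale Y: sys m insY outsY using finY by unfold_locales
sublocale J: sys "n + m" "join_sets n insX insY" "join_sets n outsX outsY"
proof
  fix i assume i: "i < n + m"
  show "finite (join_sets n insX insY i) \<and> join_sets n insX insY i \<noteq> {} \<and>
        finite (join_sets n outsX outsY i) \<and> join_sets n outsX outsY i \<noteq> {}"
    using finX[of i] finY[of "i - n"] i unfolding join_sets_def by auto
qed

abbreviation "pJ \<equiv> product_state n m pX pY"
abbreviation "insJ \<equiv> join_sets n insX insY"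

lemma leaf:
  assumes v: "valid_strategy (n + m) insJ \<sigma>" and c0: "c0 \<in> J.TO"
  shows "length (hX n (run \<sigma> c0 (n + m))) = n" "length (hY n (run \<sigma> c0 (n + m))) = m"
    "phi (pJ c0 (inputs_of (n + m) \<sigma> c0)) =
       Y.Pm pY (hY n (run \<sigma> c0 (n + m))) * phi (X.Pm pX (hX n (run \<sigma> c0 (n + m))))
     + X.Pm pX (hX n (run \<sigma> c0 (n + m))) * phi (Y.Pm pY (hY n (run \<sigma> c0 (n + m))))"
proof -
  define h where "h = run \<sigma> c0 (n + m)"
  define z where "z = inputs_of (n + m) \<sigma> c0"
  have full: "fst ` set h = {..<n + m}" unfolding h_def by (rule run_full[OF v])
  have w: "wfh (n + m) insJ h" unfolding h_def using run_wf[OF v] by simp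
  have wX: "wfh n insX (hX n h)" by (rule wfh_hX[OF w])
  have wY: "wfh m insY (hY n h)" by (rule wfh_hY[OF w])
  have bX: "fst ` set (hX n h) = {..<n}" unfolding boxes_hX full by auto
  have bY: "fst ` set (hY n h) = {..<m}"
  proof -
    have "(\<lambda>i. i - n) ` {i \<in> {..<n + m}. \<not> i < n} = {..<m}"
    proof safe
      fix j assume "j < m"
      then show "j \<in> (\<lambda>i. i - n) ` {i \<in> {..<n + m}. \<not> i < n}"
        by (intro image_eqI[of _ _ "n + j"]) auto
    qed auto
    then show ?thesis unfolding boxes_hY full by simp
  qed
  show lX: "length (hX n (run \<sigma> c0 (n + m))) = n"
    using wX bX unfolding h_def[symmetric] wfh_def by (metis card_lessThan distinct_card length_map set_map)
  show lY: "length (hY n (run \<sigma> c0 (n + m))) = m"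
    using wY bY unfolding h_def[symmetric] wfh_def by (metis card_lessThan distinct_card length_map set_map)
  have zx: "z = J.xin h" unfolding z_def h_def by (rule J.inputs_of_xin[OF v])
  have xX: "X.xin (hX n h) = left_tup n z"
  proof
    fix i show "X.xin (hX n h) i = left_tup n z i"
    proof (cases "i < n")
      case True
      then show ?thesis unfolding X.xin_def J.xin_def zx left_tup_def
        using bX full filter_hX[OF True, of h] by auto
    next
      case False then show ?thesis unfolding X.xin_def left_tup_def by simp
    qed
  qed
  have xY: "Y.xin (hY n h) = right_tup n m z"
  proof
    fix j show "Y.xin (hY n h) j = right_tup n m z j"
    proof (cases "j < m")
      case True
      have "n + j \<in> fst ` set h" using full True by auto
      then have ne: "filter (\<lambda>e. fst e = n + j) h \<noteq> []"
        by (auto simp: filter_empty_conv) force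
      have "fst (snd (hd (filter (\<lambda>e. fst e = j) (hY n h)))) = fst (snd (hd (filter (\<lambda>e. fst e = n + j) h)))"
        unfolding filter_hY hd_map[OF ne] shf_def by simp
      then show ?thesis unfolding Y.xin_def J.xin_def zx right_tup_def
        using bY full True by auto
    next
      case False then show ?thesis unfolding Y.xin_def right_tup_def by simp
    qed
  qed
  have lc: "left_tup n c0 \<in> X.TO" using left_mem[OF c0] .
  have rc: "right_tup n m c0 \<in> Y.TO" using right_mem[OF c0] .
  have zI: "z \<in> J.TI" unfolding z_def by (rule J.inputs_of_TI[OF v])
  have lz: "left_tup n z \<in> X.TI" using left_mem[OF zI] .
  have rz: "right_tup n m z \<in> Y.TI" using right_mem[OF zI] .
  have agX: "X.agrees (left_tup n c0) (hX n h)"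
    unfolding X.agrees_def hX_def left_tup_def h_def using run_out by fastforce
  have agY: "Y.agrees (right_tup n m c0) (hY n h)"
  proof -
    have "right_tup n m c0 (fst e - n) = snd (snd e)" if "e \<in> set h" "\<not> fst e < n" for e
    proof -
      have "fst e < n + m" using that full by auto
      then show ?thesis unfolding right_tup_def using that run_out[of e \<sigma> c0] unfolding h_def by auto
    qed
    then show ?thesis unfolding Y.agrees_def hY_def shf_def by auto
  qed
  have PX: "X.Pm pX (hX n h) = pX (left_tup n c0) (left_tup n z)"
    using X.Pm_full[OF bX lc agX] xX by simp
  have PY: "Y.Pm pY (hY n h) = pY (right_tup n m c0) (right_tup n m z)"
    using Y.Pm_full[OF bY rc agY] xY by simp
  have nnX: "0 \<le> pX (left_tup n c0) (left_tup n z)" using stX lc lz unfolding is_state_def by blast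
  have nnY: "0 \<le> pY (right_tup n m c0) (right_tup n m z)" using stY rc rz unfolding is_state_def by blast
  show "phi (pJ c0 (inputs_of (n + m) \<sigma> c0)) =
       Y.Pm pY (hY n (run \<sigma> c0 (n + m))) * phi (X.Pm pX (hX n (run \<sigma> c0 (n + m))))
     + X.Pm pX (hX n (run \<sigma> c0 (n + m))) * phi (Y.Pm pY (hY n (run \<sigma> c0 (n + m))))"
    unfolding h_def[symmetric] z_def[symmetric] PX PY product_state_def
    by (rule phi_mult[OF nnX nnY])
qed

definition sg :: strategy where
  "sg h = (if length (hX n h) < n then X.sopt pX (hX n h)
           else (n + fst (Y.sopt pY (hY n h)), snd (Y.sopt pY (hY n h))))"

lemma pre_hX: "distinct (map fst h) \<Longrightarrow> set (map fst h) \<subseteq> {..<n + m} \<Longrightarrow>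
   distinct (map fst (hX n h)) \<and> set (map fst (hX n h)) \<subseteq> {..<n}"
  using wfh_hX[of n m "\<lambda>_. UNIV" "\<lambda>_. UNIV" h] wfh_UNIV[of h "n + m"] unfolding join_UNIV wfh_def by auto

lemma pre_hY: "distinct (map fst h) \<Longrightarrow> set (map fst h) \<subseteq> {..<n + m} \<Longrightarrow>
   distinct (map fst (hY n h)) \<and> set (map fst (hY n h)) \<subseteq> {..<m}"
  using wfh_hY[of n m "\<lambda>_. UNIV" "\<lambda>_. UNIV" h] wfh_UNIV[of h "n + m"] unfolding join_UNIV wfh_def by auto

lemma sg_valid: "valid_strategy (n + m) insJ sg"
  unfolding valid_strategy_def
proof (intro allI impI)
  fix h :: "(nat \<times> nat \<times> nat) list"
  assume a: "distinct (map fst h) \<and> set (map fst h) \<subseteq> {..<n + m} \<and> length h < n + m"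
  have px: "distinct (map fst (hX n h))" "set (map fst (hX n h)) \<subseteq> {..<n}" using pre_hX a by auto
  have py: "distinct (map fst (hY n h))" "set (map fst (hY n h)) \<subseteq> {..<m}" using pre_hY a by auto
  show "fst (sg h) < n + m \<and> fst (sg h) \<notin> set (map fst h) \<and> snd (sg h) \<in> insJ (fst (sg h))"
  proof (cases "length (hX n h) < n")
    case True
    then have c: "X.sopt pX (hX n h) \<in> X.CS (hX n h)" using X.sopt_prop px by blast
    then show ?thesis unfolding sg_def X.CS_def using True boxes_hX[of n h] join_sets_def
      by (auto simp: join_sets_def)
  next
    case False
    then have "length (hY n h) < m" using hXY_length[of n h] a by linarith
    then have c: "Y.sopt pY (hY n h) \<in> Y.CS (hY n h)" using Y.sopt_prop py by blast
    have nb: "n + fst (Y.sopt pY (hY n h)) \<notin> fst ` set h"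
    proof
      assume "n + fst (Y.sopt pY (hY n h)) \<in> fst ` set h"
      then have "fst (Y.sopt pY (hY n h)) \<in> fst ` set (hY n h)"
        unfolding boxes_hY by (intro image_eqI[of _ _ "n + fst (Y.sopt pY (hY n h))"]) auto
      then show False using c unfolding Y.CS_def by auto
    qed
    show ?thesis unfolding sg_def using False c nb unfolding Y.CS_def by (auto simp: join_sets_def)
  qed
qed


definition Aval :: "(nat \<times> nat \<times> nat) list \<Rightarrow> real" where
  "Aval h = Y.Pm pY (hY n h) * X.Uv pX (n - length (hX n h)) (hX n h)
          + X.Pm pX (hX n h) * Y.Uv pY (m - length (hY n h)) (hY n h)"

lemma main_ind:
  assumes v: "valid_strategy (n + m) insJ \<sigma>"
  shows "d \<le> n + m \<Longrightarrow> \<forall>c0\<in>J.TO.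
     Aval (run \<sigma> c0 (n + m - d)) \<le> J.TS \<sigma> (\<lambda>c. phi (pJ c (inputs_of (n + m) \<sigma> c))) (run \<sigma> c0 (n + m - d)) \<and>
     (\<sigma> = sg \<longrightarrow> J.TS \<sigma> (\<lambda>c. phi (pJ c (inputs_of (n + m) \<sigma> c))) (run \<sigma> c0 (n + m - d)) = Aval (run \<sigma> c0 (n + m - d)))"
proof (induction d)
  case 0
  show ?case
  proof
    fix c0 assume c0: "c0 \<in> J.TO"
    have "J.TS \<sigma> (\<lambda>c. phi (pJ c (inputs_of (n + m) \<sigma> c))) (run \<sigma> c0 (n + m)) = Aval (run \<sigma> c0 (n + m))"
      unfolding J.TS_leaf[OF v c0] Aval_def leaf[OF v c0] by simp
    then show "Aval (run \<sigma> c0 (n + m - 0)) \<le> J.TS \<sigma> (\<lambda>c. phi (pJ c (inputs_of (n + m) \<sigma> c))) (run \<sigma> c0 (n + m - 0)) \<and>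
     (\<sigma> = sg \<longrightarrow> J.TS \<sigma> (\<lambda>c. phi (pJ c (inputs_of (n + m) \<sigma> c))) (run \<sigma> c0 (n + m - 0)) = Aval (run \<sigma> c0 (n + m - 0)))"
      by (metis order_refl minus_nat.diff_0)
  qed
next
  case (Suc d)
  let ?F = "\<lambda>c. phi (pJ c (inputs_of (n + m) \<sigma> c))"
  show ?case
  proof
    fix c0 assume c0: "c0 \<in> J.TO"
    define k where "k = n + m - Suc d"
    have k: "k < n + m" "Suc k = n + m - d" using Suc.prems unfolding k_def by auto
    define h where "h = run \<sigma> c0 k"
    obtain i \<xi> where s: "\<sigma> h = (i, \<xi>)" by fastforce
    have w: "wfh (n + m) insJ h" unfolding h_def using run_wf[OF v] k by simp
    have vs: "i < n + m" "i \<notin> fst ` set h" "\<xi> \<in> insJ i"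
      using J.valid_step[OF v w] k s unfolding h_def by auto
    have wX: "wfh n insX (hX n h)" by (rule wfh_hX[OF w])
    have wY: "wfh m insY (hY n h)" by (rule wfh_hY[OF w])
    have ch: "Aval (h @ [(i, \<xi>, \<alpha>)]) \<le> J.TS \<sigma> ?F (h @ [(i, \<xi>, \<alpha>)]) \<and>
        (\<sigma> = sg \<longrightarrow> J.TS \<sigma> ?F (h @ [(i, \<xi>, \<alpha>)]) = Aval (h @ [(i, \<xi>, \<alpha>)]))"
      if \<alpha>: "\<alpha> \<in> join_sets n outsX outsY i" for \<alpha>
    proof -
      have c: "h @ [(i, \<xi>, \<alpha>)] = run \<sigma> (c0(i := \<alpha>)) (n + m - d)" "c0(i := \<alpha>) \<in> J.TO"
        using J.TS_child[OF v c0 k(1) _ \<alpha>] s k unfolding h_def by auto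
      show ?thesis using Suc.IH Suc.prems c by simp
    qed
    have T: "J.TS \<sigma> ?F h = (\<Sum>\<alpha>\<in>join_sets n outsX outsY i. J.TS \<sigma> ?F (h @ [(i, \<xi>, \<alpha>)]))"
      using J.TS_split[OF v w _ s] k unfolding h_def by simp
    have le1: "(\<Sum>\<alpha>\<in>join_sets n outsX outsY i. Aval (h @ [(i, \<xi>, \<alpha>)])) \<le> J.TS \<sigma> ?F h"
      unfolding T using ch by (intro sum_mono) auto
    have eq1: "J.TS \<sigma> ?F h = (\<Sum>\<alpha>\<in>join_sets n outsX outsY i. Aval (h @ [(i, \<xi>, \<alpha>)]))" if "\<sigma> = sg"
      unfolding T using ch that by (intro sum.cong) auto
    have PXn: "0 \<le> X.Pm pX (hX n h)" using X.Pm_nonneg[OF stX wX] .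
    have PYn: "0 \<le> Y.Pm pY (hY n h)" using Y.Pm_nonneg[OF stY wY] .
    have main: "Aval h \<le> (\<Sum>\<alpha>\<in>join_sets n outsX outsY i. Aval (h @ [(i, \<xi>, \<alpha>)])) \<and>
       (\<sigma> = sg \<longrightarrow> Aval h = (\<Sum>\<alpha>\<in>join_sets n outsX outsY i. Aval (h @ [(i, \<xi>, \<alpha>)])))"
    proof (cases "i < n")
      case True
      have o: "join_sets n outsX outsY i = outsX i" and \<xi>X: "\<xi> \<in> insX i"
        using True vs unfolding join_sets_def by auto
      have ni: "i \<notin> fst ` set (hX n h)" using vs(2) unfolding boxes_hX by auto
      have lt: "length (hX n h) < n" by (rule wfh_len_lt[OF wX True ni])
      define dX where "dX = n - Suc (length (hX n h))"
      have dX: "n - length (hX n h) = Suc dX" unfolding dX_def using lt by simp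
      have cx: "hX n (h @ [(i, \<xi>, \<alpha>)]) = hX n h @ [(i, \<xi>, \<alpha>)]" "hY n (h @ [(i, \<xi>, \<alpha>)]) = hY n h" for \<alpha>
        using True by (auto simp: hX_snoc hY_snoc)
      have lc: "n - length (hX n h @ [(i, \<xi>, \<alpha>)]) = dX" for \<alpha> unfolding dX_def by simp
      have sumA: "(\<Sum>\<alpha>\<in>join_sets n outsX outsY i. Aval (h @ [(i, \<xi>, \<alpha>)]))
          = Y.Pm pY (hY n h) * (\<Sum>\<alpha>\<in>outsX i. X.Uv pX dX (hX n h @ [(i, \<xi>, \<alpha>)]))
          + X.Pm pX (hX n h) * Y.Uv pY (m - length (hY n h)) (hY n h)"
      proof -
        have "(\<Sum>\<alpha>\<in>join_sets n outsX outsY i. Aval (h @ [(i, \<xi>, \<alpha>)]))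
          = (\<Sum>\<alpha>\<in>outsX i. Y.Pm pY (hY n h) * X.Uv pX dX (hX n h @ [(i, \<xi>, \<alpha>)])
               + X.Pm pX (hX n h @ [(i, \<xi>, \<alpha>)]) * Y.Uv pY (m - length (hY n h)) (hY n h))"
          unfolding o Aval_def cx lc by simp
        also have "\<dots> = Y.Pm pY (hY n h) * (\<Sum>\<alpha>\<in>outsX i. X.Uv pX dX (hX n h @ [(i, \<xi>, \<alpha>)]))
               + (\<Sum>\<alpha>\<in>outsX i. X.Pm pX (hX n h @ [(i, \<xi>, \<alpha>)])) * Y.Uv pY (m - length (hY n h)) (hY n h)"
          by (simp add: sum.distrib sum_distrib_left sum_distrib_right)
        also have "(\<Sum>\<alpha>\<in>outsX i. X.Pm pX (hX n h @ [(i, \<xi>, \<alpha>)])) = X.Pm pX (hX n h)"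
          by (rule X.Pm_step[OF stX wX True ni \<xi>X])
        finally show ?thesis .
      qed
      have Ah: "Aval h = Y.Pm pY (hY n h) * X.Uv pX (Suc dX) (hX n h)
          + X.Pm pX (hX n h) * Y.Uv pY (m - length (hY n h)) (hY n h)"
        unfolding Aval_def dX ..
      have cs: "(i, \<xi>) \<in> X.CS (hX n h)" unfolding X.CS_def using True ni \<xi>X by auto
      have "X.Uv pX (Suc dX) (hX n h) \<le> (\<Sum>\<alpha>\<in>outsX i. X.Uv pX dX (hX n h @ [(i, \<xi>, \<alpha>)]))"
        using X.Uv_le[OF cs] by simp
      then have le: "Aval h \<le> (\<Sum>\<alpha>\<in>join_sets n outsX outsY i. Aval (h @ [(i, \<xi>, \<alpha>)]))"
        unfolding sumA Ah using PYn by (simp add: mult_left_mono)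
      have eq: "Aval h = (\<Sum>\<alpha>\<in>join_sets n outsX outsY i. Aval (h @ [(i, \<xi>, \<alpha>)]))" if so: "\<sigma> = sg"
      proof -
        have lt': "length (hX n h) < n" by (rule lt)
        then have "X.sopt pX (hX n h) = (i, \<xi>)" using s so unfolding sg_def by simp
        moreover have "distinct (map fst (hX n h))" "set (map fst (hX n h)) \<subseteq> {..<n}" using wX unfolding wfh_def by auto
        ultimately have "(\<Sum>\<alpha>\<in>outsX i. X.Uv pX dX (hX n h @ [(i, \<xi>, \<alpha>)])) = X.Uv pX (Suc dX) (hX n h)"
          using X.sopt_prop[of "hX n h" pX] lt dX unfolding dX_def by simp
        then show ?thesis unfolding sumA Ah by simp
      qed
      show ?thesis using le eq by blast
    next
      case False
      define j where "j = i - n"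
      have ij: "i = n + j" "j < m" using False vs(1) unfolding j_def by auto
      have o: "join_sets n outsX outsY i = outsY j" and \<xi>Y: "\<xi> \<in> insY j"
        using False vs ij unfolding join_sets_def by auto
      have nj: "j \<notin> fst ` set (hY n h)"
      proof
        assume "j \<in> fst ` set (hY n h)"
        then obtain i' where "i' \<in> fst ` set h" "\<not> i' < n" "j = i' - n" unfolding boxes_hY by auto
        then have "i' = i" using ij by auto
        then show False using vs(2) \<open>i' \<in> fst ` set h\<close> by simp
      qed
      have lt: "length (hY n h) < m" by (rule wfh_len_lt[OF wY ij(2) nj])
      define dY where "dY = m - Suc (length (hY n h))"
      have dY: "m - length (hY n h) = Suc dY" unfolding dY_def using lt by simp
      have cx: "hX n (h @ [(i, \<xi>, \<alpha>)]) = hX n h" "hY n (h @ [(i, \<xi>, \<alpha>)]) = hY n h @ [(j, \<xi>, \<alpha>)]" for \<alpha>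
        using False by (auto simp: hX_snoc hY_snoc shf_def j_def)
      have lc: "m - length (hY n h @ [(j, \<xi>, \<alpha>)]) = dY" for \<alpha> unfolding dY_def by simp
      have sumA: "(\<Sum>\<alpha>\<in>join_sets n outsX outsY i. Aval (h @ [(i, \<xi>, \<alpha>)]))
          = Y.Pm pY (hY n h) * X.Uv pX (n - length (hX n h)) (hX n h)
          + X.Pm pX (hX n h) * (\<Sum>\<alpha>\<in>outsY j. Y.Uv pY dY (hY n h @ [(j, \<xi>, \<alpha>)]))"
      proof -
        have "(\<Sum>\<alpha>\<in>join_sets n outsX outsY i. Aval (h @ [(i, \<xi>, \<alpha>)]))
          = (\<Sum>\<alpha>\<in>outsY j. Y.Pm pY (hY n h @ [(j, \<xi>, \<alpha>)]) * X.Uv pX (n - length (hX n h)) (hX n h)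
               + X.Pm pX (hX n h) * Y.Uv pY dY (hY n h @ [(j, \<xi>, \<alpha>)]))"
          unfolding o Aval_def cx lc by simp
        also have "\<dots> = (\<Sum>\<alpha>\<in>outsY j. Y.Pm pY (hY n h @ [(j, \<xi>, \<alpha>)])) * X.Uv pX (n - length (hX n h)) (hX n h)
               + X.Pm pX (hX n h) * (\<Sum>\<alpha>\<in>outsY j. Y.Uv pY dY (hY n h @ [(j, \<xi>, \<alpha>)]))"
          by (simp add: sum.distrib sum_distrib_left sum_distrib_right)
        also have "(\<Sum>\<alpha>\<in>outsY j. Y.Pm pY (hY n h @ [(j, \<xi>, \<alpha>)])) = Y.Pm pY (hY n h)"
          by (rule Y.Pm_step[OF stY wY ij(2) nj \<xi>Y])
        finally show ?thesis .
      qed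
      have Ah: "Aval h = Y.Pm pY (hY n h) * X.Uv pX (n - length (hX n h)) (hX n h)
          + X.Pm pX (hX n h) * Y.Uv pY (Suc dY) (hY n h)"
        unfolding Aval_def dY ..
      have cs: "(j, \<xi>) \<in> Y.CS (hY n h)" unfolding Y.CS_def using ij nj \<xi>Y by auto
      have "Y.Uv pY (Suc dY) (hY n h) \<le> (\<Sum>\<alpha>\<in>outsY j. Y.Uv pY dY (hY n h @ [(j, \<xi>, \<alpha>)]))"
        using Y.Uv_le[OF cs] by simp
      then have le: "Aval h \<le> (\<Sum>\<alpha>\<in>join_sets n outsX outsY i. Aval (h @ [(i, \<xi>, \<alpha>)]))"
        unfolding sumA Ah using PXn by (simp add: mult_left_mono)
      have eq: "Aval h = (\<Sum>\<alpha>\<in>join_sets n outsX outsY i. Aval (h @ [(i, \<xi>, \<alpha>)]))" if so: "\<sigma> = sg"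
      proof -
        have nl: "\<not> length (hX n h) < n"
        proof
          assume "length (hX n h) < n"
          then have "fst (X.sopt pX (hX n h)) = i" using s so unfolding sg_def by simp
          moreover have "X.sopt pX (hX n h) \<in> X.CS (hX n h)"
            using X.sopt_prop[of "hX n h" pX] wX \<open>length (hX n h) < n\<close> unfolding wfh_def by auto
          ultimately show False using False unfolding X.CS_def by auto
        qed
        then have "Y.sopt pY (hY n h) = (j, \<xi>)" using s so ij unfolding sg_def by (auto simp: prod_eq_iff)
        moreover have "distinct (map fst (hY n h))" "set (map fst (hY n h)) \<subseteq> {..<m}" using wY unfolding wfh_def by auto
        ultimately have "(\<Sum>\<alpha>\<in>outsY j. Y.Uv pY dY (hY n h @ [(j, \<xi>, \<alpha>)])) = Y.Uv pY (Suc dY) (hY n h)"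
          using Y.sopt_prop[of "hY n h" pY] lt dY unfolding dY_def by simp
        then show ?thesis unfolding sumA Ah by simp
      qed
      show ?thesis using le eq by blast
    qed
    show "Aval (run \<sigma> c0 (n + m - Suc d)) \<le> J.TS \<sigma> ?F (run \<sigma> c0 (n + m - Suc d)) \<and>
     (\<sigma> = sg \<longrightarrow> J.TS \<sigma> ?F (run \<sigma> c0 (n + m - Suc d)) = Aval (run \<sigma> c0 (n + m - Suc d)))"
      using main le1 eq1 unfolding h_def[symmetric] k_def[symmetric] by auto
  qed
qed

end



context sys begin
lemma Hs_cong: "valid_strategy n ins \<sigma> \<Longrightarrow> (\<And>a x. a \<in> TO \<Longrightarrow> x \<in> TI \<Longrightarrow> q a x = q' a x) \<Longrightarrow> Hs \<sigma> q = Hs \<sigma> q'"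
  unfolding Hs_def using inputs_of_TI by (intro sum.cong) auto

lemma Inf_Hs: "is_state n ins outs p \<Longrightarrow> Inf {Hs \<sigma> p | \<sigma>. valid_strategy n ins \<sigma>} = Uv p n []"
proof (rule cInf_eq_minimum)
  assume st: "is_state n ins outs p"
  show "Uv p n [] \<in> {Hs \<sigma> p | \<sigma>. valid_strategy n ins \<sigma>}"
    using Hs_bounds(2)[OF sopt_valid st] sopt_valid by (intro CollectI exI[of _ "sopt p"]) simp
  fix x assume "x \<in> {Hs \<sigma> p | \<sigma>. valid_strategy n ins \<sigma>}"
  then obtain \<sigma> where "x = Hs \<sigma> p" "valid_strategy n ins \<sigma>" by blast
  then show "Uv p n [] \<le> x" using Hs_bounds(1) st by simp
qed
end

context joint begin

lemma joint_bounds: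
  assumes v: "valid_strategy (n + m) insJ \<sigma>"
  shows "X.Uv pX n [] + Y.Uv pY m [] \<le> J.Hs \<sigma> pJ" and "\<sigma> = sg \<Longrightarrow> J.Hs \<sigma> pJ = X.Uv pX n [] + Y.Uv pY m []"
proof -
  obtain c0 where c0: "c0 \<in> J.TO" using J.TO_ne by auto
  have r: "Aval [] \<le> J.TS \<sigma> (\<lambda>c. phi (pJ c (inputs_of (n + m) \<sigma> c))) [] \<and>
     (\<sigma> = sg \<longrightarrow> J.TS \<sigma> (\<lambda>c. phi (pJ c (inputs_of (n + m) \<sigma> c))) [] = Aval [])"
    using main_ind[OF v, of "n + m"] c0 by auto
  have A: "Aval [] = X.Uv pX n [] + Y.Uv pY m []"
    unfolding Aval_def using X.Pm_nil[OF stX] Y.Pm_nil[OF stY] by (simp add: hX_def hY_def)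
  have T: "J.TS \<sigma> (\<lambda>c. phi (pJ c (inputs_of (n + m) \<sigma> c))) [] = J.Hs \<sigma> pJ"
    unfolding J.TS_def J.Hs_def by simp
  show "X.Uv pX n [] + Y.Uv pY m [] \<le> J.Hs \<sigma> pJ" and "\<sigma> = sg \<Longrightarrow> J.Hs \<sigma> pJ = X.Uv pX n [] + Y.Uv pY m []"
    using r A T by auto
qed

lemma Inf_J: "Inf {J.Hs \<sigma> pJ | \<sigma>. valid_strategy (n + m) insJ \<sigma>} = X.Uv pX n [] + Y.Uv pY m []"
proof (rule cInf_eq_minimum)
  show "X.Uv pX n [] + Y.Uv pY m [] \<in> {J.Hs \<sigma> pJ | \<sigma>. valid_strategy (n + m) insJ \<sigma>}"
    using joint_bounds(2)[OF sg_valid] sg_valid by (intro CollectI exI[of _ sg]) simp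
  fix x assume "x \<in> {J.Hs \<sigma> pJ | \<sigma>. valid_strategy (n + m) insJ \<sigma>}"
  then obtain \<sigma> where "x = J.Hs \<sigma> pJ" "valid_strategy (n + m) insJ \<sigma>" by blast
  then show "X.Uv pX n [] + Y.Uv pY m [] \<le> x" using joint_bounds(1) by simp
qed

lemma reduce_left_eq: "a \<in> X.TO \<Longrightarrow> x \<in> X.TI \<Longrightarrow> reduce_left n m insY outsY pJ a x = pX a x"
proof -
  assume a: "a \<in> X.TO" and x: "x \<in> X.TI"
  define y0 where "y0 = (SOME y. y \<in> Y.TI)"
  have "Y.TI \<noteq> {}"
  proof -
    have "restrict (\<lambda>i. SOME c. c \<in> insY i) {..<m} \<in> Y.TI"
      unfolding tuples_def using finY by (auto intro: someI_ex) (metis all_not_in_conv someI_ex)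
    then show ?thesis by auto
  qed
  then have y0: "y0 \<in> Y.TI" unfolding y0_def by (metis ex_in_conv someI_ex)
  have "reduce_left n m insY outsY pJ a x = (\<Sum>b\<in>Y.TO. pX a x * pY b y0)"
    unfolding reduce_left_def y0_def[symmetric] product_state_def
    using a x y0 by (intro sum.cong refl) (auto simp: left_join right_join)
  also have "\<dots> = pX a x" using stY y0 unfolding is_state_def by (simp add: sum_distrib_left[symmetric])
  finally show ?thesis .
qed

lemma reduce_right_eq: "b \<in> Y.TO \<Longrightarrow> y \<in> Y.TI \<Longrightarrow> reduce_right n m insX outsX pJ b y = pY b y"
proof -
  assume b: "b \<in> Y.TO" and y: "y \<in> Y.TI"
  define x0 where "x0 = (SOME x. x \<in> X.TI)"
  have "X.TI \<noteq> {}"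
  proof -
    have "restrict (\<lambda>i. SOME c. c \<in> insX i) {..<n} \<in> X.TI"
      unfolding tuples_def using finX by (auto intro: someI_ex) (metis all_not_in_conv someI_ex)
    then show ?thesis by auto
  qed
  then have x0: "x0 \<in> X.TI" unfolding x0_def by (metis ex_in_conv someI_ex)
  have "reduce_right n m insX outsX pJ b y = (\<Sum>a\<in>X.TO. pX a x0 * pY b y)"
    unfolding reduce_right_def x0_def[symmetric] product_state_def
    using b y x0 by (intro sum.cong refl) (auto simp: left_join right_join)
  also have "\<dots> = pY b y" using stX x0 unfolding is_state_def by (simp add: sum_distrib_right[symmetric])
  finally show ?thesis .
qed

end

theorem lemma6:
  fixes n m :: nat
    and insX outsX insY outsY :: "nat \<Rightarrow> nat set"
    and pX pY p :: bstate
  assumes finX: "\<And>i. i < n \<Longrightarrow> finite (insX i) \<and> insX i \<noteq> {} \<and> finite (outsX i) \<and> outsX i \<noteq> {}"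
    and finY: "\<And>j. j < m \<Longrightarrow> finite (insY j) \<and> insY j \<noteq> {} \<and> finite (outsY j) \<and> outsY j \<noteq> {}"
    and stX: "is_state n insX outsX pX"
    and stY: "is_state m insY outsY pY"
    and prod: "p = product_state n m pX pY"
  shows "H_basic (n + m) (join_sets n insX insY) (join_sets n outsX outsY) p
       = H_basic n insX outsX (reduce_left n m insY outsY p)
         + H_basic m insY outsY (reduce_right n m insX outsX p)"
proof -
  interpret joint n m insX outsX insY outsY pX pY
    using finX finY stX stY by unfold_locales
  have L: "H_basic (n + m) (join_sets n insX insY) (join_sets n outsX outsY) p = X.Uv pX n [] + Y.Uv pY m []"
    unfolding J.Hbasic_eq prod by (rule Inf_J)
  have "{X.Hs \<sigma> (reduce_left n m insY outsY p) | \<sigma>. valid_strategy n insX \<sigma>} = {X.Hs \<sigma> pX | \<sigma>. valid_strategy n insX \<sigma>}"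
  proof (rule Collect_cong)
    have e: "X.Hs \<sigma> (reduce_left n m insY outsY pJ) = X.Hs \<sigma> pX" if "valid_strategy n insX \<sigma>" for \<sigma>
      using X.Hs_cong[OF that] reduce_left_eq by blast
    fix x show "(\<exists>\<sigma>. x = X.Hs \<sigma> (reduce_left n m insY outsY p) \<and> valid_strategy n insX \<sigma>) =
          (\<exists>\<sigma>. x = X.Hs \<sigma> pX \<and> valid_strategy n insX \<sigma>)" unfolding prod using e by metis
  qed
  then have HX: "H_basic n insX outsX (reduce_left n m insY outsY p) = X.Uv pX n []"
    unfolding X.Hbasic_eq using X.Inf_Hs[OF stX] by simp
  have "{Y.Hs \<sigma> (reduce_right n m insX outsX p) | \<sigma>. valid_strategy m insY \<sigma>} = {Y.Hs \<sigma> pY | \<sigma>. valid_strategy m insY \<sigma>}"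
  proof (rule Collect_cong)
    have e: "Y.Hs \<sigma> (reduce_right n m insX outsX pJ) = Y.Hs \<sigma> pY" if "valid_strategy m insY \<sigma>" for \<sigma>
      using Y.Hs_cong[OF that] reduce_right_eq by blast
    fix x show "(\<exists>\<sigma>. x = Y.Hs \<sigma> (reduce_right n m insX outsX p) \<and> valid_strategy m insY \<sigma>) =
          (\<exists>\<sigma>. x = Y.Hs \<sigma> pY \<and> valid_strategy m insY \<sigma>)" unfolding prod using e by metis
  qed
  then have HY: "H_basic m insY outsY (reduce_right n m insX outsX p) = Y.Uv pY m []"
    unfolding Y.Hbasic_eq using Y.Inf_Hs[OF stY] by simp
  show ?thesis using L HX HY by simp
qed


end
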